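(* Assume the standing setup (with $\mathbf{u}(x,t)\in K$ for all $(x,t)\in\Omega$) and let $\bar d(x,t)=d(\mathbf{u}(x,t))$. Then there exist functions $\alpha_{ij},\beta_i,\gamma:\Omega\to\mathbb{R}$ ($1\le i,j\le n$), each locally bounded in $\Omega$, with $\gamma\ge 0$ in $\Omega$ and the matrix $\{\alpha_{ij}(x,t)\}$ locally uniformly positive definite in $\Omega$, such that $\bar d$ is a viscosity supersolution of $$\frac{\partial \bar d}{\partial t}-\sum_{i,j}\alpha_{ij}(x,t)\frac{\partial^2\bar d}{\partial x_i\partial x_j}-\sum_i\beta_i(x,t)\frac{\partial\bar d}{\partial x_i}+\gamma(x,t)\bar d\ge 0,$$ in the following sense: whenever $(\hat x,\hat t)\in\Omega$ and $\psi\in C^\infty(\Omega)$ satisfy $\psi(\hat x,\hat t)=\bar d(\hat x,\hat t)$ and $\psi\le\bar d$ in a neighborhood of $(\hat x,\hat t)$, we have $$\psi_t-\sum_{i,j}\alpha_{ij}\psi_{x_ix_j}-\sum_i\beta_i\psi_{x_i}+\gamma\psi\ge 0\quad\text{at }(\hat x,\hat t).$$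
   Context: Standing setup: $X\subseteq\mathbb{R}^n$ is open and connected, $\Omega=X\times(0,\infty)$, and $\mathbf{u}\in C^{2,1}(\Omega;\mathbb{R}^k)\cap C(\bar\Omega;\mathbb{R}^k)$ solves $$\frac{\partial\mathbf{u}}{\partial t}=D(x,t,\mathbf{u})\sum_{i,j}a_{ij}(x,t)\frac{\partial^2\mathbf{u}}{\partial x_i\partial x_j}+\sum_i M_i(x,t,\mathbf{u})\frac{\partial\mathbf{u}}{\partial x_i}+\phi(x,t,\mathbf{u})$$ in $\Omega$, where $a_{ij}$ are real-valued, $\phi$ is $\mathbb{R}^k$-valued, and $D(x,t,z)$, $M_i(x,t,z)$ are $k\times k$ real matrices. Assumptions: $\phi,D,M_i$ are Lipschitz in $z$ uniformly for $(x,t)$ in compact subsets of $\Omega$; each $a_{ij}$ is locally bounded in $\Omega$; $D$ and each $M_i$ are locally bounded in $\Omega\times\mathbb{R}^k$; $\{a_{ij}(x,t)\}$ is symmetric and locally uniformly positive definite in $\Omega$; $D(x,t,z)$ is locally uniformly positive definite in $\Omega\times\mathbb{R}^k$. $K\subseteq\mathbb{R}^k$ is a closed convex set with $K\ne\mathbb{R}^k$, compatible with $\phi,D,M_i$: for all $(x,t)\in\Omega$, all $v\in\partial K$ and every vector $\nu$ inward pointing at $v$, $\phi(x,t,v)\cdot\nu\ge0$ and $\nu$ is a left eigenvector of $D(x,t,v)$ and of each $M_i(x,t,v)$. Definitions: for $v\in\partial K$, a supporting affine functional of $K$ at $v$ is an affine $\ell:K\to\mathbb{R}$ with $\ell\ge0$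 on $K$, $\ell(v)=0$, $|\nabla\ell|=1$. A vector $\nu$ is inward pointing at $v\in\partial K$ if $\nu=\nabla\ell$ for some supporting affine functional $\ell$ of $K$ at $v$. For $z\in K$, $d(z)=\inf\{|z-v|:v\in\partial K\}$. *)

theory Defs
  imports "HOL-Analysis.Analysis"
begin

text \<open>Points of \<Omega> are pairs (x,t) :: real^'n \<times> real.\<close>

definition e_x :: "'n::finite \<Rightarrow> (real^'n) \<times> real" where
  "e_x i = (axis i 1, 0)"

definition e_t :: "(real^'n::finite) \<times> real" where
  "e_t = (0, 1)"

definition C21_on ::
  "((real^'n::finite) \<times> real) set \<Rightarrow> ((real^'n) \<times> real \<Rightarrow> real^'k::finite)
   \<Rightarrow> ((real^'n) \<times> real \<Rightarrow> real^'k) \<Rightarrow> ('n \<Rightarrow> (real^'n) \<times> real \<Rightarrow> real^'k)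
   \<Rightarrow> ('n \<Rightarrow> 'n \<Rightarrow> (real^'n) \<times> real \<Rightarrow> real^'k) \<Rightarrow> bool" where
  "C21_on S u ut ux uxx \<longleftrightarrow>
     (\<forall>p\<in>S. ((\<lambda>h. u (p + h *\<^sub>R e_t)) has_vector_derivative ut p) (at 0)) \<and>
     (\<forall>p\<in>S. \<forall>i. ((\<lambda>h. u (p + h *\<^sub>R e_x i)) has_vector_derivative ux i p) (at 0)) \<and>
     (\<forall>p\<in>S. \<forall>i j. ((\<lambda>h. ux i (p + h *\<^sub>R e_x j)) has_vector_derivative uxx i j p) (at 0)) \<and>
     continuous_on S u \<and> continuous_on S ut \<and> (\<forall>i. continuous_on S (ux i)) \<and>
     (\<forall>i j. continuous_on S (uxx i j))"

definition pd :: "'a::euclidean_space \<Rightarrow> ('a \<Rightarrow> real) \<Rightarrow> 'a \<Rightarrow> real" where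
  "pd v f p = frechet_derivative f (at p) v"

fun iter_pd :: "'a::euclidean_space list \<Rightarrow> ('a \<Rightarrow> real) \<Rightarrow> 'a \<Rightarrow> real" where
  "iter_pd [] f = f"
| "iter_pd (v # vs) f = pd v (iter_pd vs f)"

definition C_inf_on :: "'a::euclidean_space set \<Rightarrow> ('a \<Rightarrow> real) \<Rightarrow> bool" where
  "C_inf_on S f \<longleftrightarrow>
     (\<forall>vs. (\<forall>p\<in>S. iter_pd vs f differentiable (at p)) \<and> continuous_on S (iter_pd vs f))"

definition locally_bounded_on :: "'a::metric_space set \<Rightarrow> ('a \<Rightarrow> 'b::real_normed_vector) \<Rightarrow> bool" where
  "locally_bounded_on S f \<longleftrightarrow>
     (\<forall>q\<in>S. \<exists>e>0. \<exists>B. \<forall>q'\<in>S \<inter> ball q e. norm (f q') \<le> B)"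

definition loc_unif_pos_def :: "'a::metric_space set \<Rightarrow> ('a \<Rightarrow> real^'k^'k::finite) \<Rightarrow> bool" where
  "loc_unif_pos_def S A \<longleftrightarrow>
     (\<forall>q\<in>S. \<exists>e>0. \<exists>c>0. \<forall>q'\<in>S \<inter> ball q e. \<forall>\<xi>. \<xi> \<bullet> (A q' *v \<xi>) \<ge> c * (norm \<xi>)\<^sup>2)"

definition lipschitz_z_on :: "'a::metric_space set \<Rightarrow> ('a \<Rightarrow> 'z::metric_space \<Rightarrow> 'b::real_normed_vector) \<Rightarrow> bool" where
  "lipschitz_z_on S F \<longleftrightarrow>
     (\<forall>C. compact C \<and> C \<subseteq> S \<longrightarrow> (\<exists>L. \<forall>p\<in>C. \<forall>z w. norm (F p z - F p w) \<le> L * dist z w))"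

definition supporting_affine :: "(real^'k::finite) set \<Rightarrow> real^'k \<Rightarrow> (real^'k \<Rightarrow> real) \<Rightarrow> bool" where
  "supporting_affine K v l \<longleftrightarrow> v \<in> frontier K \<and>
     (\<exists>\<nu> c. (\<forall>z. l z = \<nu> \<bullet> z + c) \<and> norm \<nu> = 1) \<and>
     (\<forall>z\<in>K. l z \<ge> 0) \<and> l v = 0"

definition inward_pointing :: "(real^'k::finite) set \<Rightarrow> real^'k \<Rightarrow> real^'k \<Rightarrow> bool" where
  "inward_pointing K v \<nu> \<longleftrightarrow> (\<exists>l. supporting_affine K v l \<and> (\<forall>z. l z = \<nu> \<bullet> z + l 0))"

definition left_eigenvector :: "real^'k::finite \<Rightarrow> real^'k^'k \<Rightarrow> bool" where
  "left_eigenvector \<nu> A \<longleftrightarrow> \<nu> \<noteq> 0 \<and> (\<exists>lam. \<nu> v* A = lam *\<^sub>R \<nu>)"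

definition dist_bd :: "(real^'k::finite) set \<Rightarrow> real^'k \<Rightarrow> real" where
  "dist_bd K z = infdist z (frontier K)"

end

theory Submission
  imports Defs
begin


lemma vd_shift:
  fixes g :: "real \<Rightarrow> 'b::real_normed_vector"
  assumes "((\<lambda>h. g (y + h)) has_vector_derivative D) (at 0)"
  shows "(g has_vector_derivative D) (at y)"
proof -
  have "((\<lambda>h. g (y + h)) \<circ> (\<lambda>s. s - y) has_vector_derivative (1 *\<^sub>R D)) (at y)"
    by (rule vector_diff_chain_at) (auto intro!: derivative_eq_intros assms)
  then show ?thesis by (simp add: o_def)
qed

lemma ex_vec:
  fixes v :: "real^'n::finite"
  shows "(v, 0::real) = (v - (v$k) *\<^sub>R axis k 1, 0) + (v$k) *\<^sub>R e_x k"
  by (simp add: e_x_def)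




lemma norm_e_x[simp]: "norm (e_x i :: (real^'n::finite) \<times> real) = 1"
  by (simp add: e_x_def norm_Pair)

lemma in_ball_add: fixes p w :: "'a::real_normed_vector" shows "norm w < r \<Longrightarrow> p + w \<in> ball p r"
  by (simp add: dist_norm)

lemma dir_deriv:
  fixes F :: "(real^'n::finite) \<times> real \<Rightarrow> 'b::real_normed_vector"
  assumes S: "open S" "p \<in> S"
    and dF: "\<And>q i. q \<in> S \<Longrightarrow> ((\<lambda>h. F (q + h *\<^sub>R e_x i)) has_vector_derivative DF i q) (at 0)"
    and cF: "\<And>i. continuous_on S (DF i)"
  shows "((\<lambda>s. F (p + s *\<^sub>R (v,0))) has_vector_derivative (\<Sum>i\<in>UNIV. v$i *\<^sub>R DF i p)) (at 0)"
proof -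
  obtain r where r: "r > 0" "ball p r \<subseteq> S" using S openE by blast
  have main: "finite T \<Longrightarrow> \<forall>v. (\<forall>i. i \<notin> T \<longrightarrow> v$i = 0) \<longrightarrow>
     ((\<lambda>s. F (p + s *\<^sub>R (v,0))) has_vector_derivative (\<Sum>i\<in>T. v$i *\<^sub>R DF i p)) (at 0)" for T
  proof (induction T rule: finite_induct)
    case empty
    show ?case
    proof (intro allI impI)
      fix v :: "real^'n" assume "\<forall>i. i \<notin> {} \<longrightarrow> v $ i = 0"
      then have "v = 0" by (simp add: vec_eq_iff)
      then show "((\<lambda>s. F (p + s *\<^sub>R (v,0))) has_vector_derivative (\<Sum>i\<in>{}. v$i *\<^sub>R DF i p)) (at 0)"
        by simp
    qed
  next
    case (insert k T)
    show ?case
    proof (intro allI impI)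
      fix v :: "real^'n" assume supp: "\<forall>i. i \<notin> insert k T \<longrightarrow> v $ i = 0"
      define c where "c = v$k"
      define v' where "v' = v - c *\<^sub>R axis k 1"
      have v'supp: "\<forall>i. i \<notin> T \<longrightarrow> v' $ i = 0"
        using supp by (auto simp: v'_def c_def axis_def)
      have v'eq: "\<And>i. i \<in> T \<Longrightarrow> v'$i = v$i"
        using insert.hyps(2) by (auto simp: v'_def axis_def)
      have IH: "((\<lambda>s. F (p + s *\<^sub>R (v',0))) has_vector_derivative (\<Sum>i\<in>T. v$i *\<^sub>R DF i p)) (at 0)"
        using insert.IH v'supp v'eq by (metis (no_types, lifting) sum.cong)
      define \<rho> where "\<rho> = r / (norm v' + 2)"
      have "norm v' + 2 > 0" by (smt (verit) norm_ge_zero)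
      then have \<rho>: "\<rho> > 0" using r by (simp add: \<rho>_def)
      define X where "X = ball (0::real) \<rho>"
      define f where "f x y = F (p + x *\<^sub>R (v',0) + y *\<^sub>R e_x k)" for x y :: real
      have inS: "p + x *\<^sub>R (v',0) + y *\<^sub>R e_x k \<in> S" if "x \<in> X" "y \<in> X" for x y
      proof -
        have "norm (x *\<^sub>R (v',0::real) + y *\<^sub>R e_x k) \<le> \<bar>x\<bar> * norm v' + \<bar>y\<bar>"
          by (rule order_trans[OF norm_triangle_ineq]) (simp add: norm_Pair)
        also have "\<dots> \<le> \<rho> * norm v' + \<rho>"
          using that by (intro add_mono mult_right_mono) (auto simp: X_def)
        also have "\<dots> < r"
        proof -
          have "\<rho> * (norm v' + 2) = r" using \<rho>_def \<open>norm v' + 2 > 0\<close> by simp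
          then show ?thesis using \<rho> by (simp add: algebra_simps)
        qed
        finally have "p + (x *\<^sub>R (v',0::real) + y *\<^sub>R e_x k) \<in> ball p r" by (rule in_ball_add)
        then show ?thesis using r by (auto simp: add.assoc)
      qed
      have fx: "((\<lambda>x. f x 0) has_derivative (\<lambda>tx. tx *\<^sub>R (\<Sum>i\<in>T. v$i *\<^sub>R DF i p))) (at 0 within X)"
        using IH unfolding f_def has_vector_derivative_def by (auto intro: has_derivative_at_withinI)
      have fy: "((\<lambda>y. f x y) has_derivative blinfun_apply (blinfun_scaleR_left (DF k (p + x *\<^sub>R (v',0) + y *\<^sub>R e_x k)))) (at y within X)"
        if "x \<in> X" "y \<in> X" for x y
      proof -
        have "((\<lambda>h. f x (y + h)) has_vector_derivative DF k (p + x *\<^sub>R (v',0) + y *\<^sub>R e_x k)) (at 0)"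
          using dF[OF inS[OF that], of k] by (simp add: f_def scaleR_add_left add.assoc)
        then have "((\<lambda>y. f x y) has_vector_derivative DF k (p + x *\<^sub>R (v',0) + y *\<^sub>R e_x k)) (at y)"
          by (rule vd_shift)
        then show ?thesis unfolding has_vector_derivative_def
          by (auto intro: has_derivative_at_withinI)
      qed
      have cp: "isCont (DF k) p"
        using cF[of k] S by (simp add: continuous_on_eq_continuous_at)
      have ca: "isCont (\<lambda>(x,y). p + x *\<^sub>R (v',0) + y *\<^sub>R e_x k) (0::real,0::real)"
        by (simp add: split_def)
      have cc: "isCont (\<lambda>(x,y). DF k (p + x *\<^sub>R (v',0) + y *\<^sub>R e_x k)) (0::real,0::real)"
        using continuous_at_compose[OF ca, of "DF k"] cp by (simp add: o_def split_def zero_prod_def[symmetric])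
      have fyc: "continuous (at (0,0) within X \<times> X) (\<lambda>(x,y). blinfun_scaleR_left (DF k (p + x *\<^sub>R (v',0) + y *\<^sub>R e_x k)))"
      proof -
        have "isCont (\<lambda>z. blinfun_scaleR_left (DF k (p + fst z *\<^sub>R (v',0) + snd z *\<^sub>R e_x k))) (0::real,0::real)"
        proof -
          have cc': "isCont (\<lambda>z. DF k (p + fst z *\<^sub>R (v',0) + snd z *\<^sub>R e_x k)) (0::real,0::real)"
            using cc by (simp add: split_def)
          show ?thesis
            by (rule isCont_o2[OF cc' linear_continuous_at[OF bounded_linear_blinfun_scaleR_left]])
        qed
        then show ?thesis by (simp add: split_def continuous_at_imp_continuous_within)
      qed
      have X0: "(0::real) \<in> X" "convex X" "open X" using \<rho> by (auto simp: X_def)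
      have P: "((\<lambda>(x,y). f x y) has_derivative (\<lambda>(tx,ty). tx *\<^sub>R (\<Sum>i\<in>T. v$i *\<^sub>R DF i p) + blinfun_apply (blinfun_scaleR_left (DF k (p + 0 *\<^sub>R (v',0) + 0 *\<^sub>R e_x k))) ty)) (at (0,0) within X \<times> X)"
        by (rule has_derivative_partialsI[OF fx fy fyc X0(1,2)])
      have P2: "((\<lambda>(x,y). f x y) has_derivative (\<lambda>(tx,ty). tx *\<^sub>R (\<Sum>i\<in>T. v$i *\<^sub>R DF i p) + ty *\<^sub>R DF k p)) (at (0,0))"
      proof -
        have "open (X \<times> X)" using X0 by (simp add: open_Times)
        then have "at (0,0) within X \<times> X = at (0::real,0::real)"
          using X0 by (intro at_within_open) auto
        then show ?thesis using P by (simp add: zero_prod_def[symmetric])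
      qed
      have L: "((\<lambda>s. (s, c * s)) has_derivative (\<lambda>h. (h, c * h))) (at (0::real))"
        by (auto intro!: derivative_eq_intros)
      have Q: "((\<lambda>s. (\<lambda>(x,y). f x y) (s, c * s)) has_derivative (\<lambda>h. (\<lambda>(tx,ty). tx *\<^sub>R (\<Sum>i\<in>T. v$i *\<^sub>R DF i p) + ty *\<^sub>R DF k p) (h, c * h))) (at 0)"
      proof -
        have P3: "((\<lambda>(x,y). f x y) has_derivative (\<lambda>(tx,ty). tx *\<^sub>R (\<Sum>i\<in>T. v$i *\<^sub>R DF i p) + ty *\<^sub>R DF k p)) (at ((\<lambda>s. (s, c * s)) 0))"
          using P2 by simp
        show ?thesis using has_derivative_compose[OF L P3] by simp
      qed
      have feq: "(\<lambda>s. (\<lambda>(x,y). f x y) (s, c * s)) = (\<lambda>s. F (p + s *\<^sub>R (v,0)))"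
      proof
        fix s
        have "(v,0::real) = (v', 0) + c *\<^sub>R e_x k" using ex_vec[of v k] by (simp add: v'_def c_def)
        then have "s *\<^sub>R (v,0::real) = s *\<^sub>R (v',0) + (c * s) *\<^sub>R e_x k" by (simp add: scaleR_add_right)
        then show "(\<lambda>(x,y). f x y) (s, c * s) = F (p + s *\<^sub>R (v,0))" by (simp add: f_def add.assoc)
      qed
      have seq: "(\<Sum>i\<in>insert k T. v$i *\<^sub>R DF i p) = (\<Sum>i\<in>T. v$i *\<^sub>R DF i p) + c *\<^sub>R DF k p"
        using insert.hyps by (simp add: c_def)
      show "((\<lambda>s. F (p + s *\<^sub>R (v,0))) has_vector_derivative (\<Sum>i\<in>insert k T. v$i *\<^sub>R DF i p)) (at 0)"
        unfolding has_vector_derivative_def seq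
        using Q unfolding feq by (simp add: scaleR_add_right mult.commute)
    qed
  qed
  show ?thesis using main[of UNIV] by simp
qed




lemma second_order_1d:
  fixes g g' :: "real \<Rightarrow> real"
  assumes \<delta>: "\<delta> > 0"
    and dg: "\<And>s. \<bar>s\<bar> < \<delta> \<Longrightarrow> (g has_real_derivative g' s) (at s)"
    and dg': "(g' has_real_derivative c) (at 0)"
    and g'0: "g' 0 = 0"
    and mn: "\<And>s. \<bar>s\<bar> < \<delta> \<Longrightarrow> g 0 \<le> g s"
  shows "c \<ge> 0"
proof (rule ccontr)
  assume "\<not> c \<ge> 0"
  then have "c < 0" by simp
  from DERIV_neg_dec_right[OF dg' this] obtain d where d: "d > 0" "\<And>h. h > 0 \<Longrightarrow> h < d \<Longrightarrow> g' (0 + h) < g' 0"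
    by blast
  define s0 where "s0 = min d \<delta> / 2"
  have s0: "0 < s0" "s0 < d" "s0 < \<delta>" using d \<delta> by (auto simp: s0_def)
  obtain z where z: "0 < z" "z < s0" "g s0 - g 0 = (s0 - 0) * g' z"
    using MVT2[of 0 s0 g g'] s0 dg by force
  have "g' z < 0" using d(2)[of z] z s0 g'0 by simp
  then have "s0 * g' z < 0" using s0 by (simp add: mult_pos_neg)
  then have "g s0 < g 0" using z by simp
  moreover have "g 0 \<le> g s0" using mn s0 by simp
  ultimately show False by simp
qed

lemma second_order:
  fixes w :: "(real^'n::finite) \<times> real \<Rightarrow> real"
  assumes S: "open S" "p0 \<in> S"
    and mn: "\<And>q. q \<in> S \<Longrightarrow> w p0 \<le> w q"
    and dw: "\<And>q i. q \<in> S \<Longrightarrow> ((\<lambda>h. w (q + h *\<^sub>R e_x i)) has_vector_derivative W1 i q) (at 0)"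
    and cW1: "\<And>i. continuous_on S (W1 i)"
    and dW: "\<And>q i j. q \<in> S \<Longrightarrow> ((\<lambda>h. W1 i (q + h *\<^sub>R e_x j)) has_vector_derivative W2 i j q) (at 0)"
    and cW2: "\<And>i j. continuous_on S (W2 i j)"
  shows "0 \<le> (\<Sum>i\<in>UNIV. \<Sum>j\<in>UNIV. v$i * v$j * W2 i j p0)"
proof -
  obtain r where r: "r > 0" "ball p0 r \<subseteq> S" using S openE by blast
  define \<delta> where "\<delta> = r / (norm v + 1)"
  have nv: "norm v + 1 > 0" by (smt (verit) norm_ge_zero)
  have \<delta>: "\<delta> > 0" using r nv by (simp add: \<delta>_def)
  have inS: "p0 + s *\<^sub>R (v,0) \<in> S" if "\<bar>s\<bar> < \<delta>" for s
  proof -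
    have "norm (s *\<^sub>R (v,0::real)) = \<bar>s\<bar> * norm v" by (simp add: norm_Pair)
    also have "\<dots> \<le> \<delta> * norm v" using that by (intro mult_right_mono) auto
    also have "\<dots> < r"
    proof -
      have "\<delta> * (norm v + 1) = r" using nv by (simp add: \<delta>_def)
      then show ?thesis using \<delta> by (simp add: algebra_simps)
    qed
    finally have "p0 + s *\<^sub>R (v,0) \<in> ball p0 r" by (rule in_ball_add)
    then show ?thesis using r by auto
  qed
  define g where "g s = w (p0 + s *\<^sub>R (v,0))" for s
  define G where "G s = (\<Sum>i\<in>UNIV. v$i * W1 i (p0 + s *\<^sub>R (v,0)))" for s
  have W10: "W1 i p0 = 0" for i
  proof -
    have "((\<lambda>h. w (p0 + h *\<^sub>R e_x i)) has_real_derivative W1 i p0) (at 0)"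
      using dw[OF S(2)] by (simp add: has_real_derivative_iff_has_vector_derivative)
    moreover obtain e where e: "e > 0" "ball p0 e \<subseteq> S" using S openE by blast
    moreover have "\<forall>y. \<bar>0 - y\<bar> < e \<longrightarrow> w (p0 + 0 *\<^sub>R e_x i) \<le> w (p0 + y *\<^sub>R e_x i)"
    proof (intro allI impI)
      fix y :: real assume "\<bar>0 - y\<bar> < e"
      then have "p0 + y *\<^sub>R e_x i \<in> ball p0 e" by (intro in_ball_add) simp
      then have "p0 + y *\<^sub>R e_x i \<in> S" using e(2) by blast
      then show "w (p0 + 0 *\<^sub>R e_x i) \<le> w (p0 + y *\<^sub>R e_x i)" using mn[of "p0 + y *\<^sub>R e_x i"] by simp
    qed
    ultimately show ?thesis using DERIV_local_min by blast
  qed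
  have dg: "(g has_real_derivative G s) (at s)" if "\<bar>s\<bar> < \<delta>" for s
  proof -
    have "((\<lambda>h. w ((p0 + s *\<^sub>R (v,0)) + h *\<^sub>R (v,0))) has_vector_derivative (\<Sum>i\<in>UNIV. v$i *\<^sub>R W1 i (p0 + s *\<^sub>R (v,0)))) (at 0)"
      by (rule dir_deriv[OF S(1) inS[OF that] dw cW1])
    then have "((\<lambda>h. g (s + h)) has_vector_derivative G s) (at 0)"
      by (simp add: g_def G_def scaleR_add_left add.assoc)
    then show ?thesis using vd_shift by (simp add: has_real_derivative_iff_has_vector_derivative)
  qed
  have dG: "(G has_real_derivative (\<Sum>i\<in>UNIV. v$i * (\<Sum>j\<in>UNIV. v$j * W2 i j p0))) (at 0)"
    unfolding G_def
  proof (intro DERIV_sum DERIV_cmult)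
    fix i
    have "((\<lambda>h. W1 i (p0 + h *\<^sub>R (v,0))) has_vector_derivative (\<Sum>j\<in>UNIV. v$j *\<^sub>R W2 i j p0)) (at 0)"
      by (rule dir_deriv[OF S(1) S(2) dW cW2])
    then show "((\<lambda>h. W1 i (p0 + h *\<^sub>R (v,0))) has_real_derivative (\<Sum>j\<in>UNIV. v$j * W2 i j p0)) (at 0)"
      by (simp add: has_real_derivative_iff_has_vector_derivative)
  qed
  have "0 \<le> (\<Sum>i\<in>UNIV. v$i * (\<Sum>j\<in>UNIV. v$j * W2 i j p0))"
  proof (rule second_order_1d[OF \<delta> dg dG])
    show "G 0 = 0" by (simp add: G_def W10 zero_prod_def[symmetric])
    show "g 0 \<le> g s" if "\<bar>s\<bar> < \<delta>" for s using mn inS[OF that] by (simp add: g_def zero_prod_def[symmetric])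
  qed auto
  then show ?thesis by (simp add: sum_distrib_left mult.assoc)
qed




definition QF :: "('n::finite \<Rightarrow> 'n \<Rightarrow> real) \<Rightarrow> ('n \<Rightarrow> real) \<Rightarrow> real" where
  "QF A \<xi> = (\<Sum>i\<in>UNIV. \<Sum>j\<in>UNIV. \<xi> i * \<xi> j * A i j)"

lemma sum_if_const: "(\<Sum>j\<in>S. if P then f j else 0) = (if P then (\<Sum>j\<in>S. f j) else (0::real))"
  by simp

lemma if_one_mult: "(if P then 1 else 0) * (x::real) = (if P then x else 0)"
  by simp

lemma QF_shift:
  fixes A :: "'n::finite \<Rightarrow> 'n \<Rightarrow> real"
  assumes sym: "\<And>i j. A i j = A j i"
  shows "QF A (\<lambda>i. \<xi> i + t * (if i = k then 1 else 0)) = QF A \<xi> + 2*t*(\<Sum>i\<in>UNIV. \<xi> i * A i k) + t^2 * A k k"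
proof -
  have e: "(\<xi> i + t * (if i = k then 1 else 0)) * (\<xi> j + t * (if j = k then 1 else 0)) * A i j
     = \<xi> i * \<xi> j * A i j + t * (if j = k then \<xi> i * A i k else 0) + t * (if i = k then \<xi> j * A j k else 0)
       + (if i = k then (if j = k then t^2 * A k k else 0) else 0)" for i j
    using sym[of k j] by (auto simp: algebra_simps power2_eq_square)
  have s2: "(\<Sum>i\<in>UNIV. \<Sum>j\<in>UNIV. (if i = k then \<xi> j * A j k else 0)) = (\<Sum>i\<in>UNIV. \<xi> i * A i k)"
    by (subst sum.swap) simp
  show ?thesis
    unfolding QF_def e
    by (simp add: sum.distrib sum_distrib_left[symmetric] s2 sum_if_const)
qed

lemma trace_psd:
  fixes A H :: "'n::finite \<Rightarrow> 'n \<Rightarrow> real"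
  assumes symA: "\<And>i j. A i j = A j i"
    and psdA: "\<And>\<xi>. QF A \<xi> \<ge> 0"
    and psdH: "\<And>\<xi>. QF H \<xi> \<ge> 0"
  shows "(\<Sum>i\<in>UNIV. \<Sum>j\<in>UNIV. A i j * H i j) \<ge> 0"
proof -
  have main: "finite T \<Longrightarrow> \<forall>A. (\<forall>i j. A i j = A j i) \<and> (\<forall>\<xi>. QF A \<xi> \<ge> 0) \<and> (\<forall>i j. i \<notin> T \<or> j \<notin> T \<longrightarrow> A i j = 0)
      \<longrightarrow> (\<Sum>i\<in>UNIV. \<Sum>j\<in>UNIV. A i j * H i j) \<ge> 0" for T
  proof (induction T rule: finite_induct)
    case empty
    then show ?case by simp
  next
    case (insert k T)
    show ?case
    proof (intro allI impI)
      fix A :: "'n \<Rightarrow> 'n \<Rightarrow> real"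
      assume asm: "(\<forall>i j. A i j = A j i) \<and> (\<forall>\<xi>. QF A \<xi> \<ge> 0) \<and> (\<forall>i j. i \<notin> insert k T \<or> j \<notin> insert k T \<longrightarrow> A i j = 0)"
      have sym: "\<And>i j. A i j = A j i" and psd: "\<And>\<xi>. QF A \<xi> \<ge> 0"
        and supp: "\<And>i j. i \<notin> insert k T \<or> j \<notin> insert k T \<Longrightarrow> A i j = 0"
        using asm by auto
      have Q0: "QF A (\<lambda>i. 0) = 0" by (simp add: QF_def)
      have akk: "A k k \<ge> 0"
        using psd[of "\<lambda>i. 0 + 1 * (if i = k then 1 else 0)"] QF_shift[OF sym, where \<xi>="\<lambda>i. 0" and t=1 and k=k] Q0 by simp
      show "(\<Sum>i\<in>UNIV. \<Sum>j\<in>UNIV. A i j * H i j) \<ge> 0"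
      proof (cases "A k k = 0")
        case True
        have col: "A j k = 0" for j
        proof (rule ccontr)
          assume b: "A j k \<noteq> 0"
          define \<xi> where "\<xi> = (\<lambda>i::'n. if i = j then 1 else (0::real))"
          have bs: "(\<Sum>i\<in>UNIV. \<xi> i * A i k) = A j k" by (simp add: \<xi>_def if_one_mult)
          define t where "t = - (QF A \<xi> + 1) / (2 * A j k)"
          have "QF A (\<lambda>i. \<xi> i + t * (if i = k then 1 else 0)) = QF A \<xi> + 2 * t * A j k"
            using QF_shift[OF sym, where \<xi>=\<xi> and t=t and k=k] True bs by simp
          also have "\<dots> = -1" using b by (simp add: t_def field_simps)
          finally show False using psd by (metis neg_0_le_iff_le not_one_le_zero)
        qed
        have "\<forall>i j. i \<notin> T \<or> j \<notin> T \<longrightarrow> A i j = 0"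
        proof (intro allI impI)
          fix i j assume "i \<notin> T \<or> j \<notin> T"
          then show "A i j = 0" using supp col sym by (metis insert_iff)
        qed
        then show ?thesis using insert.IH[rule_format, of A] sym psd by blast
      next
        case False
        define a where "a = A k k"
        have a: "a > 0" using False akk by (simp add: a_def)
        define A' where "A' i j = A i j - A i k * A k j / a" for i j
        have sym': "\<And>i j. A' i j = A' j i" unfolding A'_def by (metis sym mult.commute)
        have psd': "QF A' \<xi> \<ge> 0" for \<xi>
        proof -
          define b where "b = (\<Sum>i\<in>UNIV. \<xi> i * A i k)"
          have "QF A' \<xi> = QF A \<xi> - (\<Sum>i\<in>UNIV. \<Sum>j\<in>UNIV. (\<xi> i * A i k) * (\<xi> j * A j k)) / a"
          proof -
            have A'e: "A' i j = A i j - A i k * A j k / a" for i j using sym[of k j] by (simp add: A'_def)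
            show ?thesis unfolding QF_def A'e
              by (simp add: algebra_simps sum_subtractf sum_divide_distrib)
          qed
          also have "(\<Sum>i\<in>UNIV. \<Sum>j\<in>UNIV. (\<xi> i * A i k) * (\<xi> j * A j k)) = b * b"
            by (simp add: b_def sum_product)
          finally have 1: "QF A' \<xi> = QF A \<xi> - b * b / a" .
          have "QF A (\<lambda>i. \<xi> i + (- b / a) * (if i = k then 1 else 0)) = QF A \<xi> + 2 * (- b / a) * b + (- b / a)^2 * a"
            using QF_shift[OF sym, where \<xi>=\<xi> and t="- b / a" and k=k] by (simp add: b_def a_def)
          also have "\<dots> = QF A \<xi> - b * b / a" using a by (simp add: field_simps power2_eq_square)
          finally show ?thesis using 1 psd by metis
        qed
        have supp': "\<forall>i j. i \<notin> T \<or> j \<notin> T \<longrightarrow> A' i j = 0"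
        proof (intro allI impI)
          fix i j assume ij: "i \<notin> T \<or> j \<notin> T"
          show "A' i j = 0"
          proof (cases "i = k \<or> j = k")
            case True
            then show ?thesis using False by (auto simp: A'_def a_def)
          next
            case False
            then have "A i j = 0 \<and> (A i k = 0 \<or> A k j = 0)" using ij supp by auto
            then show ?thesis by (simp add: A'_def)
          qed
        qed
        have IH': "(\<Sum>i\<in>UNIV. \<Sum>j\<in>UNIV. A' i j * H i j) \<ge> 0"
          using insert.IH[rule_format, of A'] sym' psd' supp' by blast
        have "(\<Sum>i\<in>UNIV. \<Sum>j\<in>UNIV. A i j * H i j) = (\<Sum>i\<in>UNIV. \<Sum>j\<in>UNIV. A' i j * H i j) + QF H (\<lambda>i. A i k) / a"
        proof -
          have pt: "A i j * H i j = A' i j * H i j + (A i k * A j k * H i j) / a" for i j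
            using a by (simp add: A'_def field_simps sym[of k j])
          have "(\<Sum>i\<in>UNIV. \<Sum>j\<in>UNIV. A i j * H i j) = (\<Sum>i\<in>UNIV. \<Sum>j\<in>UNIV. A' i j * H i j + (A i k * A j k * H i j) / a)"
            by (simp only: pt)
          also have "\<dots> = (\<Sum>i\<in>UNIV. \<Sum>j\<in>UNIV. A' i j * H i j) + (\<Sum>i\<in>UNIV. \<Sum>j\<in>UNIV. A i k * A j k * H i j) / a"
            by (simp only: sum.distrib sum_divide_distrib)
          finally show ?thesis unfolding QF_def .
        qed
        moreover have "QF H (\<lambda>i. A i k) / a \<ge> 0" using psdH a by simp
        ultimately show ?thesis using IH' by simp
      qed
    qed
  qed
  have fin: "finite (UNIV::'n set)" by simp
  show ?thesis by (rule main[OF fin, rule_format]) (use symA psdA psdH in auto)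
qed




lemma supp_at:
  fixes K :: "(real^'k::finite) set"
  assumes cv: "convex K" and cl: "closed K" and v: "v \<in> frontier K"
  obtains a where "a \<noteq> 0" "\<And>y. y \<in> K \<Longrightarrow> a \<bullet> v \<le> a \<bullet> y"
proof -
  have vK: "v \<in> K" using v frontier_subset_closed[OF cl] by blast
  show ?thesis
  proof (cases "interior K = {}")
    case True
    obtain a b where ab: "a \<noteq> 0" "K \<subseteq> {x. a \<bullet> x = b}"
      using empty_interior_subset_hyperplane[OF cv True] by blast
    have "a \<bullet> v \<le> a \<bullet> y" if "y \<in> K" for y
    proof -
      have "a \<bullet> y = b" "a \<bullet> v = b" using ab(2) vK that by blast+
      then show ?thesis by simp
    qed
    then show ?thesis using that[OF ab(1)] by blast
  next
    case False
    have ri: "rel_interior K = interior K" using rel_interior_nonempty_interior[OF False] .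
    have "v \<notin> interior K" using v by (simp add: frontier_def)
    then have "v \<notin> rel_interior K" using ri by simp
    then obtain a where "a \<noteq> 0" "\<And>y. y \<in> K \<Longrightarrow> a \<bullet> v \<le> a \<bullet> y"
      using supporting_hyperplane_rel_boundary[OF cv vK] by metis
    then show ?thesis using that by blast
  qed
qed

lemma ell_ge_dist:
  fixes K :: "(real^'k::finite) set"
  assumes nu: "norm \<nu> = 1" and pos: "\<And>y. y \<in> K \<Longrightarrow> 0 \<le> \<nu> \<bullet> (y - v)" and y: "y \<in> K"
  shows "dist_bd K y \<le> \<nu> \<bullet> (y - v)"
proof (rule field_le_epsilon)
  fix e :: real assume e: "e > 0"
  define L where "L = \<nu> \<bullet> (y - v)"
  have L: "L \<ge> 0" using pos y by (simp add: L_def)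
  define w where "w = y - (L + e) *\<^sub>R \<nu>"
  have "\<nu> \<bullet> (w - v) = L - (L + e)"
    using nu by (simp add: w_def L_def inner_diff_right algebra_simps dot_square_norm)
  then have wK: "w \<notin> K" using pos[of w] e by auto
  have "closed_segment y w \<inter> frontier K \<noteq> {}"
    by (rule connected_Int_frontier) (use y wK in auto)
  then obtain f where f: "f \<in> closed_segment y w" "f \<in> frontier K" by blast
  have "dist_bd K y \<le> dist y f" unfolding dist_bd_def by (rule infdist_le[OF f(2)])
  also have "\<dots> \<le> norm (w - y)" using segment_bound(1)[OF f(1)] by (simp add: dist_norm norm_minus_commute)
  also have "\<dots> = L + e" using nu L e by (simp add: w_def)
  finally show "dist_bd K y \<le> \<nu> \<bullet> (y - v) + e" by (simp add: L_def)
qed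

lemma geom:
  fixes K :: "(real^'k::finite) set"
  assumes cl: "closed K" and cv: "convex K" and ne: "K \<noteq> UNIV" and z: "z \<in> K"
  shows "\<exists>v \<nu>. v \<in> frontier K \<and> norm \<nu> = 1 \<and> (\<forall>y\<in>K. dist_bd K y \<le> \<nu> \<bullet> (y - v))
     \<and> \<nu> \<bullet> (z - v) = dist_bd K z \<and> dist z v = dist_bd K z"
proof -
  have fne: "frontier K \<noteq> {}" using frontier_not_empty[of K] ne z by blast
  obtain v where v: "v \<in> frontier K" "infdist z (frontier K) = dist z v"
    using infdist_attains_inf[OF frontier_closed fne] by blast
  obtain a where a: "a \<noteq> 0" "\<And>y. y \<in> K \<Longrightarrow> a \<bullet> v \<le> a \<bullet> y" using supp_at[OF cv cl v(1)] by blast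
  define \<nu> where "\<nu> = a /\<^sub>R norm a"
  have nu: "norm \<nu> = 1" using a by (simp add: \<nu>_def)
  have pos: "0 \<le> \<nu> \<bullet> (y - v)" if "y \<in> K" for y
    using a(2)[OF that] by (simp add: \<nu>_def inner_diff_right mult_left_mono)
  have ge: "\<forall>y\<in>K. dist_bd K y \<le> \<nu> \<bullet> (y - v)" using ell_ge_dist[OF nu pos] by blast
  have "\<nu> \<bullet> (z - v) \<le> norm \<nu> * norm (z - v)" by (rule norm_cauchy_schwarz)
  then have le: "\<nu> \<bullet> (z - v) \<le> dist_bd K z" using nu v by (simp add: dist_bd_def dist_norm)
  have dz: "dist z v = dist_bd K z" using v by (simp add: dist_bd_def)
  show ?thesis using v(1) nu ge le dz z by (intro exI[of _ v] exI[of _ \<nu>]) force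
qed




lemma local_to_compact:
  fixes S :: "'a::metric_space set"
  assumes C: "compact C" "C \<subseteq> S"
    and loc: "\<And>q. q \<in> S \<Longrightarrow> \<exists>e>0. \<exists>B::real. \<forall>q'\<in>S \<inter> ball q e. P B q'"
    and mono: "\<And>B B' x. P B x \<Longrightarrow> B \<le> B' \<Longrightarrow> P B' x"
  shows "\<exists>B. \<forall>x\<in>C. P B x"
proof -
  obtain E Bf where EB: "\<And>q. q \<in> S \<Longrightarrow> E q > 0 \<and> (\<forall>q'\<in>S \<inter> ball q (E q). P (Bf q) q')"
    using loc by metis
  have cov: "C \<subseteq> (\<Union>q\<in>C. ball q (E q))" using EB C(2) by force
  obtain D where D: "D \<subseteq> C" "finite D" "C \<subseteq> (\<Union>q\<in>D. ball q (E q))"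
    using compactE_image[OF C(1) _ cov] by blast
  define B where "B = (\<Sum>q\<in>D. \<bar>Bf q\<bar>)"
  have "P B x" if x: "x \<in> C" for x
  proof -
    obtain q where q: "q \<in> D" "x \<in> ball q (E q)" using D(3) x by blast
    have "q \<in> S" using q D C by blast
    then have "P (Bf q) x" using EB q x C by blast
    moreover have "Bf q \<le> B"
    proof -
      have "Bf q \<le> \<bar>Bf q\<bar>" by simp
      also have "\<dots> \<le> B" unfolding B_def by (rule member_le_sum) (use q D in auto)
      finally show ?thesis .
    qed
    ultimately show ?thesis by (rule mono)
  qed
  then show ?thesis by blast
qed

definition LipC :: "('p \<Rightarrow> 'z::metric_space \<Rightarrow> 'b::real_normed_vector) \<Rightarrow> 'p \<Rightarrow> real" where
  "LipC F p = Inf {L. \<forall>z w. norm (F p z - F p w) \<le> L * dist z w}"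

lemma LipC_props:
  fixes F :: "'p \<Rightarrow> real^'k::finite \<Rightarrow> 'b::real_normed_vector"
  assumes ex: "\<forall>z w. norm (F p z - F p w) \<le> L * dist z w"
  shows "norm (F p z - F p w) \<le> LipC F p * dist z w" and "LipC F p \<ge> 0" and "LipC F p \<le> L"
proof -
  let ?S = "{L. \<forall>z w. norm (F p z - F p w) \<le> L * dist z w}"
  have ne: "?S \<noteq> {}" using ex by blast
  have nn: "L' \<ge> 0" if "L' \<in> ?S" for L'
  proof -
    have "(0::real^'k) \<noteq> axis undefined 1" by (simp add: axis_eq_0_iff)
    then have d: "dist (0::real^'k) (axis undefined 1) > 0" by simp
    have "norm (F p 0 - F p (axis undefined 1)) \<le> L' * dist (0::real^'k) (axis undefined 1)"
      using that by blast
    then have "0 \<le> L' * dist (0::real^'k) (axis undefined 1)"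
      using norm_ge_zero order_trans by blast
    then show ?thesis using d by (simp add: zero_le_mult_iff)
  qed
  have bdd: "bdd_below ?S" using nn by (meson bdd_below.I)
  show "LipC F p \<le> L" unfolding LipC_def by (rule cInf_lower) (use ex bdd in auto)
  show "LipC F p \<ge> 0" unfolding LipC_def by (rule cInf_greatest[OF ne]) (use nn in auto)
  show "norm (F p z - F p w) \<le> LipC F p * dist z w"
  proof (cases "z = w")
    case True then show ?thesis by simp
  next
    case False
    then have dpos: "dist z w > 0" by simp
    have "norm (F p z - F p w) / dist z w \<le> LipC F p"
      unfolding LipC_def
    proof (rule cInf_greatest[OF ne])
      fix L' assume "L' \<in> ?S"
      then have "norm (F p z - F p w) \<le> L' * dist z w" by blast
      then show "norm (F p z - F p w) / dist z w \<le> L'" using dpos by (simp add: divide_le_eq)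
    qed
    then show ?thesis using dpos by (simp add: divide_le_eq)
  qed
qed

lemma matvec_bound:
  fixes E :: "real^'k::finite^'m::finite"
  shows "norm (E *v x) \<le> real CARD('m) * real CARD('k) * norm E * norm x"
proof -
  have "\<bar>E $ i $ j\<bar> \<le> norm E" for i j
    using order_trans[OF component_le_norm_cart Finite_Cartesian_Product.norm_nth_le] by blast
  then have "onorm ((*v) E) \<le> real CARD('m) * real CARD('k) * norm E"
    by (rule onorm_le_matrix_component)
  then have "onorm ((*v) E) * norm x \<le> real CARD('m) * real CARD('k) * norm E * norm x"
    by (simp add: mult_right_mono)
  moreover have "norm (E *v x) \<le> onorm ((*v) E) * norm x"
    by (rule onorm[OF matrix_vector_mul_bounded_linear])
  ultimately show ?thesis by linarith
qed

lemma pd_vd: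
  fixes f :: "'a::euclidean_space \<Rightarrow> real"
  assumes "f differentiable (at q)"
  shows "((\<lambda>h. f (q + h *\<^sub>R e)) has_vector_derivative pd e f q) (at 0)"
proof -
  have fd: "(f has_derivative frechet_derivative f (at q)) (at q)"
    using assms frechet_derivative_works by blast
  have lin: "linear (frechet_derivative f (at q))"
    using fd has_derivative_linear by blast
  have l: "((\<lambda>h. q + h *\<^sub>R e) has_derivative (\<lambda>h. h *\<^sub>R e)) (at (0::real))"
    by (auto intro!: derivative_eq_intros)
  have fd': "(f has_derivative frechet_derivative f (at q)) (at ((\<lambda>h. q + h *\<^sub>R e) 0))"
    using fd by simp
  have "((\<lambda>h. f (q + h *\<^sub>R e)) has_derivative (\<lambda>h. frechet_derivative f (at q) (h *\<^sub>R e))) (at 0)"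
    using has_derivative_compose[OF l fd'] by simp
  then show ?thesis unfolding has_vector_derivative_def pd_def
    using linear_scale[OF lin] by simp
qed

lemma inner_vd:
  assumes "(f has_vector_derivative f') F"
  shows "((\<lambda>h. c \<bullet> f h) has_vector_derivative (c \<bullet> f')) F"
  using bounded_linear.has_vector_derivative[OF bounded_linear_inner_right assms] .

lemma first_order:
  fixes w :: "'a::real_normed_vector \<Rightarrow> real"
  assumes S: "open S" "p0 \<in> S" and mn: "\<And>q. q \<in> S \<Longrightarrow> w p0 \<le> w q"
    and d: "((\<lambda>h. w (p0 + h *\<^sub>R dv)) has_vector_derivative c) (at 0)"
  shows "c = 0"
proof -
  obtain e where e: "e > 0" "ball p0 e \<subseteq> S" using S openE by blast
  define e' where "e' = e / (norm dv + 1)"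
  have nv: "norm dv + 1 > 0" by (smt (verit) norm_ge_zero)
  have e': "e' > 0" using e nv by (simp add: e'_def)
  have "\<forall>y. \<bar>0 - y\<bar> < e' \<longrightarrow> w (p0 + 0 *\<^sub>R dv) \<le> w (p0 + y *\<^sub>R dv)"
  proof (intro allI impI)
    fix y :: real assume y: "\<bar>0 - y\<bar> < e'"
    have "norm (y *\<^sub>R dv) = \<bar>y\<bar> * norm dv" by simp
    also have "\<dots> \<le> e' * norm dv" using y by (intro mult_right_mono) auto
    also have "\<dots> < e"
    proof -
      have "e' * (norm dv + 1) = e" using nv by (simp add: e'_def)
      then show ?thesis using e' by (simp add: algebra_simps)
    qed
    finally have "p0 + y *\<^sub>R dv \<in> ball p0 e" by (simp add: dist_norm)
    then have "p0 + y *\<^sub>R dv \<in> S" using e by blast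
    then show "w (p0 + 0 *\<^sub>R dv) \<le> w (p0 + y *\<^sub>R dv)" using mn by simp
  qed
  moreover have "((\<lambda>h. w (p0 + h *\<^sub>R dv)) has_real_derivative c) (at 0)"
    using d by (simp add: has_real_derivative_iff_has_vector_derivative)
  ultimately show ?thesis using DERIV_local_min[OF _ e'] by blast
qed

lemma QF_inner:
  fixes M :: "real^'n::finite^'n"
  shows "\<xi> \<bullet> (M *v \<xi>) = (\<Sum>i\<in>UNIV. \<Sum>j\<in>UNIV. \<xi>$i * \<xi>$j * M$i$j)"
  by (simp add: inner_vec_def matrix_vector_mult_def sum_distrib_left mult.assoc mult.commute mult.left_commute)

lemma scaleR_matvec:
  fixes M :: "real^'n::finite^'m::finite"
  shows "(\<chi> i j. c * M$i$j) *v x = c *\<^sub>R (M *v x)"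
  by (simp add: vec_eq_iff matrix_vector_mult_def sum_distrib_left mult.assoc)




lemma visc:
  fixes \<Omega> :: "((real^'n::finite) \<times> real) set"
    and u :: "(real^'n) \<times> real \<Rightarrow> real^'k::finite"
    and a :: "'n \<Rightarrow> 'n \<Rightarrow> (real^'n) \<times> real \<Rightarrow> real"
    and D :: "(real^'n) \<times> real \<Rightarrow> real^'k \<Rightarrow> real^'k^'k"
    and M :: "'n \<Rightarrow> (real^'n) \<times> real \<Rightarrow> real^'k \<Rightarrow> real^'k^'k"
    and \<phi> :: "(real^'n) \<times> real \<Rightarrow> real^'k \<Rightarrow> real^'k"
    and K :: "(real^'k) set"
  assumes \<Omega>: "open \<Omega>" "p0 \<in> \<Omega>"
    and dt: "\<And>p. p \<in> \<Omega> \<Longrightarrow> ((\<lambda>h. u (p + h *\<^sub>R e_t)) has_vector_derivative ut p) (at 0)"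
    and dx: "\<And>p i. p \<in> \<Omega> \<Longrightarrow> ((\<lambda>h. u (p + h *\<^sub>R e_x i)) has_vector_derivative ux i p) (at 0)"
    and dxx: "\<And>p i j. p \<in> \<Omega> \<Longrightarrow> ((\<lambda>h. ux i (p + h *\<^sub>R e_x j)) has_vector_derivative uxx i j p) (at 0)"
    and cux: "\<And>i. continuous_on \<Omega> (ux i)" and cuxx: "\<And>i j. continuous_on \<Omega> (uxx i j)"
    and Am: "Am = (\<Sum>i\<in>UNIV. \<Sum>j\<in>UNIV. a i j p0 *\<^sub>R uxx i j p0)"
    and ueq: "ut p0 = D p0 (u p0) *v Am + (\<Sum>i\<in>UNIV. M i p0 (u p0) *v ux i p0) + \<phi> p0 (u p0)"
    and asym: "\<And>i j. a i j p0 = a j i p0"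
    and apsd: "\<And>\<xi>. \<xi> \<bullet> ((\<chi> i j. a i j p0) *v \<xi>) \<ge> 0"
    and Nz: "norm Nz = 1"
    and dom: "\<And>q. q \<in> \<Omega> \<Longrightarrow> dist_bd K (u q) \<le> Nz \<bullet> (u q - Vz)"
    and dd0: "Nz \<bullet> (u p0 - Vz) = dist_bd K (u p0)" "dist (u p0) Vz = dist_bd K (u p0)"
    and lamE: "Nz v* D p0 Vz = lam *\<^sub>R Nz" and lam: "lam \<ge> 0"
    and muE: "\<And>i. Nz v* M i p0 Vz = mu i *\<^sub>R Nz"
    and phi0: "\<phi> p0 Vz \<bullet> Nz \<ge> 0"
    and LD: "\<And>z w. norm (D p0 z - D p0 w) \<le> LD * dist z w"
    and LM: "\<And>i z w. norm (M i p0 z - M i p0 w) \<le> LM i * dist z w"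
    and LF: "\<And>z w. norm (\<phi> p0 z - \<phi> p0 w) \<le> LF * dist z w"
    and LDn: "LD \<ge> 0" and LMn: "\<And>i. LM i \<ge> 0"
    and cK: "cK = real CARD('k) * real CARD('k)"
    and \<psi>: "C_inf_on \<Omega> \<psi>" and \<psi>0: "\<psi> p0 = dist_bd K (u p0)"
    and e: "e > 0" and \<psi>le: "\<forall>q\<in>\<Omega> \<inter> ball p0 e. \<psi> q \<le> dist_bd K (u q)"
  shows "pd e_t \<psi> p0 - (\<Sum>i\<in>UNIV. \<Sum>j\<in>UNIV. (lam * a i j p0) * iter_pd [e_x i, e_x j] \<psi> p0)
          - (\<Sum>i\<in>UNIV. mu i * pd (e_x i) \<psi> p0)
          + (cK * LD * norm Am + (\<Sum>i\<in>UNIV. cK * LM i * norm (ux i p0)) + LF) * \<psi> p0 \<ge> 0"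
proof -
  define S where "S = \<Omega> \<inter> ball p0 e"
  have S: "open S" "p0 \<in> S" "S \<subseteq> \<Omega>" using \<Omega> e by (auto simp: S_def)
  have \<psi>d: "\<And>vs p. p \<in> \<Omega> \<Longrightarrow> iter_pd vs \<psi> differentiable (at p)"
    and \<psi>c: "\<And>vs. continuous_on \<Omega> (iter_pd vs \<psi>)"
    using \<psi> unfolding C_inf_on_def by auto
  define w where "w q = Nz \<bullet> u q - \<psi> q" for q
  have mn: "w p0 \<le> w q" if "q \<in> S" for q
  proof -
    have "w p0 = Nz \<bullet> Vz" using dd0(1) \<psi>0 by (simp add: w_def inner_diff_right)
    moreover have "\<psi> q \<le> Nz \<bullet> (u q - Vz)"
    proof -
      have "\<psi> q \<le> dist_bd K (u q)" using \<psi>le that by (simp add: S_def)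
      also have "\<dots> \<le> Nz \<bullet> (u q - Vz)" using dom[of q] that S by blast
      finally show ?thesis .
    qed
    ultimately show ?thesis by (simp add: w_def inner_diff_right)
  qed
  define W1 where "W1 i q = Nz \<bullet> ux i q - pd (e_x i) \<psi> q" for i q
  define W2 where "W2 i j q = Nz \<bullet> uxx i j q - iter_pd [e_x j, e_x i] \<psi> q" for i j q
  have dw: "((\<lambda>h. w (q + h *\<^sub>R e_x i)) has_vector_derivative W1 i q) (at 0)" if "q \<in> S" for q i
  proof -
    have q: "q \<in> \<Omega>" using that S by auto
    have "((\<lambda>h. \<psi> (q + h *\<^sub>R e_x i)) has_vector_derivative pd (e_x i) \<psi> q) (at 0)"
      using pd_vd[OF \<psi>d[OF q, of "[]"]] by simp
    then show ?thesis unfolding w_def W1_def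
      by (intro has_vector_derivative_diff inner_vd dx[OF q])
  qed
  have cW1: "continuous_on S (W1 i)" for i
  proof -
    have "continuous_on \<Omega> (\<lambda>q. Nz \<bullet> ux i q - iter_pd [e_x i] \<psi> q)"
      by (intro continuous_intros cux \<psi>c)
    then show ?thesis unfolding W1_def using S(3) by (simp add: continuous_on_subset)
  qed
  have dW: "((\<lambda>h. W1 i (q + h *\<^sub>R e_x j)) has_vector_derivative W2 i j q) (at 0)" if "q \<in> S" for q i j
  proof -
    have q: "q \<in> \<Omega>" using that S by auto
    have "((\<lambda>h. pd (e_x i) \<psi> (q + h *\<^sub>R e_x j)) has_vector_derivative pd (e_x j) (pd (e_x i) \<psi>) q) (at 0)"
      using pd_vd[OF \<psi>d[OF q, of "[e_x i]"]] by simp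
    then show ?thesis unfolding W1_def W2_def
      by (simp, intro has_vector_derivative_diff inner_vd dxx[OF q])
  qed
  have cW2: "continuous_on S (W2 i j)" for i j
  proof -
    have "continuous_on \<Omega> (\<lambda>q. Nz \<bullet> uxx i j q - iter_pd [e_x j, e_x i] \<psi> q)"
      by (intro continuous_intros cuxx \<psi>c)
    then show ?thesis unfolding W2_def using S(3) by (simp add: continuous_on_subset)
  qed
  have so: "0 \<le> (\<Sum>i\<in>UNIV. \<Sum>j\<in>UNIV. v$i * v$j * W2 i j p0)" for v
    by (rule second_order[OF S(1,2) mn dw cW1 dW cW2])
  have tr: "0 \<le> (\<Sum>i\<in>UNIV. \<Sum>j\<in>UNIV. a i j p0 * W2 i j p0)"
  proof (rule trace_psd)
    show "a i j p0 = a j i p0" for i j by (rule asym)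
    show "QF (\<lambda>i j. a i j p0) \<xi> \<ge> 0" for \<xi>
      using apsd[of "\<chi> i. \<xi> i"] by (simp add: QF_inner QF_def)
    show "QF (\<lambda>i j. W2 i j p0) \<xi> \<ge> 0" for \<xi>
      using so[of "\<chi> i. \<xi> i"] by (simp add: QF_def)
  qed
  have FOt: "Nz \<bullet> ut p0 = pd e_t \<psi> p0"
  proof -
    have "((\<lambda>h. w (p0 + h *\<^sub>R e_t)) has_vector_derivative (Nz \<bullet> ut p0 - pd e_t \<psi> p0)) (at 0)"
      unfolding w_def
      by (intro has_vector_derivative_diff inner_vd dt[OF \<Omega>(2)])
         (use pd_vd[OF \<psi>d[OF \<Omega>(2), of "[]"]] in simp)
    from first_order[OF S(1,2) mn this] show ?thesis by simp
  qed
  have FOx: "Nz \<bullet> ux i p0 = pd (e_x i) \<psi> p0" for i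
    using first_order[OF S(1,2) mn dw[OF S(2)]] by (simp add: W1_def)
  define dd where "dd = dist_bd K (u p0)"
  have dd: "dd \<ge> 0" unfolding dd_def dist_bd_def by (rule infdist_nonneg)
  have dist0: "dist (u p0) Vz = dd" using dd0 by (simp add: dd_def)
  have innb: "\<bar>Nz \<bullet> x\<bar> \<le> norm x" for x
    using Cauchy_Schwarz_ineq2[of Nz x] Nz by simp
  have errb: "Nz \<bullet> (E *v x) \<ge> - (cK * L * dd * norm x)" if "norm E \<le> L * dd" for E :: "real^'k^'k" and L x
  proof -
    have "\<bar>Nz \<bullet> (E *v x)\<bar> \<le> norm (E *v x)" by (rule innb)
    also have "\<dots> \<le> cK * norm E * norm x" using matvec_bound[of E x] by (simp add: cK)
    also have "\<dots> \<le> cK * (L * dd) * norm x"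
      using that by (intro mult_right_mono mult_left_mono) (auto simp: cK)
    finally show ?thesis by (simp add: mult.assoc)
  qed
  have Dsplit: "Nz \<bullet> (D p0 (u p0) *v Am) = lam * (Nz \<bullet> Am) + Nz \<bullet> ((D p0 (u p0) - D p0 Vz) *v Am)"
  proof -
    have "Nz \<bullet> (D p0 Vz *v Am) = lam * (Nz \<bullet> Am)"
      using lamE by (simp add: dot_lmul_matrix[symmetric])
    then show ?thesis by (simp add: matrix_vector_mult_diff_rdistrib inner_diff_right)
  qed
  have Derr: "Nz \<bullet> ((D p0 (u p0) - D p0 Vz) *v Am) \<ge> - (cK * LD * dd * norm Am)"
    by (rule errb) (use LD[of "u p0" Vz] dist0 in simp)
  have NAm: "Nz \<bullet> Am = (\<Sum>i\<in>UNIV. \<Sum>j\<in>UNIV. a i j p0 * W2 i j p0) + (\<Sum>i\<in>UNIV. \<Sum>j\<in>UNIV. a i j p0 * iter_pd [e_x j, e_x i] \<psi> p0)"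
    unfolding Am W2_def by (simp add: inner_sum_right right_diff_distrib sum_subtractf)
  have swap: "(\<Sum>i\<in>UNIV. \<Sum>j\<in>UNIV. (lam * a i j p0) * iter_pd [e_x i, e_x j] \<psi> p0)
      = lam * (\<Sum>i\<in>UNIV. \<Sum>j\<in>UNIV. a i j p0 * iter_pd [e_x j, e_x i] \<psi> p0)"
  proof -
    have "(\<Sum>i\<in>UNIV. \<Sum>j\<in>UNIV. (lam * a i j p0) * iter_pd [e_x i, e_x j] \<psi> p0)
       = (\<Sum>j\<in>UNIV. \<Sum>i\<in>UNIV. (lam * a i j p0) * iter_pd [e_x i, e_x j] \<psi> p0)"
      by (rule sum.swap)
    also have "\<dots> = (\<Sum>j\<in>UNIV. \<Sum>i\<in>UNIV. lam * (a j i p0 * iter_pd [e_x i, e_x j] \<psi> p0))"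
      by (simp add: asym[of _ ] mult.assoc)
    finally show ?thesis by (simp add: sum_distrib_left)
  qed
  have Dterm: "Nz \<bullet> (D p0 (u p0) *v Am) \<ge> (\<Sum>i\<in>UNIV. \<Sum>j\<in>UNIV. (lam * a i j p0) * iter_pd [e_x i, e_x j] \<psi> p0) - cK * LD * dd * norm Am"
  proof -
    have "lam * (Nz \<bullet> Am) \<ge> lam * (\<Sum>i\<in>UNIV. \<Sum>j\<in>UNIV. a i j p0 * iter_pd [e_x j, e_x i] \<psi> p0)"
      using NAm tr lam by (simp add: mult_left_mono)
    then show ?thesis using Dsplit Derr swap by linarith
  qed
  have Mterm: "Nz \<bullet> (M i p0 (u p0) *v ux i p0) \<ge> mu i * pd (e_x i) \<psi> p0 - cK * LM i * dd * norm (ux i p0)" for i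
  proof -
    have "Nz \<bullet> (M i p0 Vz *v ux i p0) = mu i * pd (e_x i) \<psi> p0"
      using muE[of i] FOx[of i] by (simp add: dot_lmul_matrix[symmetric])
    moreover have "Nz \<bullet> ((M i p0 (u p0) - M i p0 Vz) *v ux i p0) \<ge> - (cK * LM i * dd * norm (ux i p0))"
      by (rule errb) (use LM[of i "u p0" Vz] dist0 in simp)
    ultimately show ?thesis by (simp add: matrix_vector_mult_diff_rdistrib inner_diff_right)
  qed
  have Msum: "Nz \<bullet> (\<Sum>i\<in>UNIV. M i p0 (u p0) *v ux i p0) \<ge> (\<Sum>i\<in>UNIV. mu i * pd (e_x i) \<psi> p0) - (\<Sum>i\<in>UNIV. cK * LM i * norm (ux i p0)) * dd"
  proof -
    have "Nz \<bullet> (\<Sum>i\<in>UNIV. M i p0 (u p0) *v ux i p0) = (\<Sum>i\<in>UNIV. Nz \<bullet> (M i p0 (u p0) *v ux i p0))"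
      by (rule inner_sum_right)
    also have "\<dots> \<ge> (\<Sum>i\<in>UNIV. mu i * pd (e_x i) \<psi> p0 - cK * LM i * dd * norm (ux i p0))"
      by (rule sum_mono) (rule Mterm)
    finally have 1: "Nz \<bullet> (\<Sum>i\<in>UNIV. M i p0 (u p0) *v ux i p0) \<ge> (\<Sum>i\<in>UNIV. mu i * pd (e_x i) \<psi> p0) - (\<Sum>i\<in>UNIV. cK * LM i * dd * norm (ux i p0))"
      by (simp add: sum_subtractf)
    have "(\<Sum>i\<in>UNIV. cK * LM i * norm (ux i p0)) * dd = (\<Sum>i\<in>UNIV. cK * LM i * dd * norm (ux i p0))"
      by (simp add: sum_distrib_right sum_distrib_left mult_ac)
    then show ?thesis using 1 by simp
  qed
  have Fterm: "Nz \<bullet> \<phi> p0 (u p0) \<ge> - (LF * dd)"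
  proof -
    have "\<bar>Nz \<bullet> (\<phi> p0 (u p0) - \<phi> p0 Vz)\<bar> \<le> LF * dd"
      using innb[of "\<phi> p0 (u p0) - \<phi> p0 Vz"] LF[of "u p0" Vz] dist0 by simp
    moreover have "Nz \<bullet> \<phi> p0 Vz \<ge> 0" using phi0 by (simp add: inner_commute)
    ultimately show ?thesis by (simp add: inner_diff_right abs_le_iff)
  qed
  have tot: "pd e_t \<psi> p0 = Nz \<bullet> (D p0 (u p0) *v Am) + Nz \<bullet> (\<Sum>i\<in>UNIV. M i p0 (u p0) *v ux i p0) + Nz \<bullet> \<phi> p0 (u p0)"
    using FOt ueq by (simp add: inner_add_right)
  have "\<psi> p0 = dd" using \<psi>0 by (simp add: dd_def)
  then show ?thesis using tot Dterm Msum Fterm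
    by (simp add: algebra_simps)
qed




lemma le_sum_abs: "(f::'i::finite \<Rightarrow> real) i \<le> (\<Sum>j\<in>UNIV. \<bar>f j\<bar>)"
proof -
  have "f i \<le> \<bar>f i\<bar>" by simp
  also have "\<dots> \<le> (\<Sum>j\<in>UNIV. \<bar>f j\<bar>)" by (rule member_le_sum) auto
  finally show ?thesis .
qed

lemma le_sum_abs2: "(f::'i::finite \<Rightarrow> 'j::finite \<Rightarrow> real) i j \<le> (\<Sum>i\<in>UNIV. \<Sum>j\<in>UNIV. \<bar>f i j\<bar>)"
proof -
  have "f i j \<le> (\<Sum>j\<in>UNIV. \<bar>f i j\<bar>)" by (rule le_sum_abs)
  also have "\<dots> \<le> \<bar>\<Sum>j\<in>UNIV. \<bar>f i j\<bar>\<bar>" by simp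
  also have "\<dots> \<le> (\<Sum>i\<in>UNIV. \<bar>\<Sum>j\<in>UNIV. \<bar>f i j\<bar>\<bar>)" by (rule member_le_sum) auto
  also have "\<dots> = (\<Sum>i\<in>UNIV. \<Sum>j\<in>UNIV. \<bar>f i j\<bar>)" by (simp add: sum_nonneg)
  finally show ?thesis .
qed

lemma pos_mono_aux:
  fixes A :: "'a \<Rightarrow> real^'k::finite^'k"
  shows "B > 0 \<and> (\<forall>\<xi>. (1/B) * (norm \<xi>)\<^sup>2 \<le> \<xi> \<bullet> (A x *v \<xi>)) \<Longrightarrow> B \<le> B' \<Longrightarrow>
    B' > 0 \<and> (\<forall>\<xi>. (1/B') * (norm \<xi>)\<^sup>2 \<le> \<xi> \<bullet> (A x *v \<xi>))"
proof -
  assume h: "B > 0 \<and> (\<forall>\<xi>. (1/B) * (norm \<xi>)\<^sup>2 \<le> \<xi> \<bullet> (A x *v \<xi>))" and BB: "B \<le> B'"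
  have B': "B' > 0" using h BB by simp
  have "1/B' \<le> 1/B" using h BB by (simp add: frac_le)
  then have "(1/B') * (norm \<xi>)\<^sup>2 \<le> (1/B) * (norm \<xi>)\<^sup>2" for \<xi> :: "real^'k" by (rule mult_right_mono) simp
  then show ?thesis using h B' by (meson order_trans)
qed

lemma pos_local:
  fixes A :: "'a::metric_space \<Rightarrow> real^'k::finite^'k"
  assumes "loc_unif_pos_def S A"
  shows "\<And>q. q \<in> S \<Longrightarrow> \<exists>e>0. \<exists>B::real. \<forall>q'\<in>S \<inter> ball q e. B > 0 \<and> (\<forall>\<xi>. (1/B) * (norm \<xi>)\<^sup>2 \<le> \<xi> \<bullet> (A q' *v \<xi>))"
proof -
  fix q assume q: "q \<in> S"
  obtain e c where ec: "e > 0" "c > 0" "\<forall>q'\<in>S \<inter> ball q e. \<forall>\<xi>. \<xi> \<bullet> (A q' *v \<xi>) \<ge> c * (norm \<xi>)\<^sup>2"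
    using assms q unfolding loc_unif_pos_def_def by metis
  show "\<exists>e>0. \<exists>B::real. \<forall>q'\<in>S \<inter> ball q e. B > 0 \<and> (\<forall>\<xi>. (1/B) * (norm \<xi>)\<^sup>2 \<le> \<xi> \<bullet> (A q' *v \<xi>))"
    using ec by (intro exI[of _ e] conjI exI[of _ "1/c"]) auto
qed


lemma compact_img_bound:
  fixes f :: "'a \<Rightarrow> 'b::real_normed_vector"
  assumes "compact (f ` C)"
  shows "\<exists>B. \<forall>p\<in>C. norm (f p) \<le> B"
proof -
  have "bounded (f ` C)" using assms by (rule compact_imp_bounded)
  then obtain B where "\<forall>x\<in>f ` C. norm x \<le> B" unfolding bounded_iff by blast
  then show ?thesis by blast
qed

lemma lb_compact:
  fixes f :: "'a::metric_space \<Rightarrow> 'b::real_normed_vector"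
  assumes lb: "locally_bounded_on S f" and C: "compact C" "C \<subseteq> S"
  shows "\<exists>B. \<forall>x\<in>C. norm (f x) \<le> B"
proof (rule local_to_compact[OF C, where P="\<lambda>B x. norm (f x) \<le> B"])
  show "\<exists>e>0. \<exists>B. \<forall>q'\<in>S \<inter> ball q e. norm (f q') \<le> B" if "q \<in> S" for q
    using lb that unfolding locally_bounded_on_def by blast
  show "norm (f x) \<le> B'" if "norm (f x) \<le> B" "B \<le> B'" for B B' x
    using that by linarith
qed

lemma pos_compact:
  fixes A :: "'a::metric_space \<Rightarrow> real^'k::finite^'k"
  assumes lp: "loc_unif_pos_def S A" and C: "compact C" "C \<subseteq> S"
  shows "\<exists>B. \<forall>x\<in>C. B > 0 \<and> (\<forall>\<xi>. (1/B) * (norm \<xi>)\<^sup>2 \<le> \<xi> \<bullet> (A x *v \<xi>))"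
proof (rule local_to_compact[OF C, where P="\<lambda>B x. B > 0 \<and> (\<forall>\<xi>. (1/B) * (norm \<xi>)\<^sup>2 \<le> \<xi> \<bullet> (A x *v \<xi>))"])
  show "\<exists>e>0. \<exists>B. \<forall>q'\<in>S \<inter> ball q e. B > 0 \<and> (\<forall>\<xi>. (1/B) * (norm \<xi>)\<^sup>2 \<le> \<xi> \<bullet> (A q' *v \<xi>))" if "q \<in> S" for q
    by (rule pos_local[OF lp that])
  show "B' > 0 \<and> (\<forall>\<xi>. (1/B') * (norm \<xi>)\<^sup>2 \<le> \<xi> \<bullet> (A x *v \<xi>))"
    if "B > 0 \<and> (\<forall>\<xi>. (1/B) * (norm \<xi>)\<^sup>2 \<le> \<xi> \<bullet> (A x *v \<xi>))" "B \<le> B'" for B B' x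
    by (rule pos_mono_aux[where A=A, OF that])
qed


theorem theorem2:
  fixes X :: "(real^'n::finite) set"
    and \<Omega> :: "((real^'n) \<times> real) set"
    and u :: "(real^'n) \<times> real \<Rightarrow> real^'k::finite"
    and a :: "'n \<Rightarrow> 'n \<Rightarrow> (real^'n) \<times> real \<Rightarrow> real"
    and D :: "(real^'n) \<times> real \<Rightarrow> real^'k \<Rightarrow> real^'k^'k"
    and M :: "'n \<Rightarrow> (real^'n) \<times> real \<Rightarrow> real^'k \<Rightarrow> real^'k^'k"
    and \<phi> :: "(real^'n) \<times> real \<Rightarrow> real^'k \<Rightarrow> real^'k"
    and K :: "(real^'k) set"
  assumes X_open: "open X" and X_conn: "connected X"
    and \<Omega>_def: "\<Omega> = X \<times> {0<..}"
    and u_reg: "\<exists>ut ux uxx. C21_on \<Omega> u ut ux uxx \<and>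
        (\<forall>p\<in>\<Omega>. ut p = D p (u p) *v (\<Sum>i\<in>UNIV. \<Sum>j\<in>UNIV. a i j p *\<^sub>R uxx i j p)
                        + (\<Sum>i\<in>UNIV. M i p (u p) *v ux i p) + \<phi> p (u p))"
    and u_cont: "continuous_on (closure \<Omega>) u"
    and lip_\<phi>: "lipschitz_z_on \<Omega> \<phi>"
    and lip_D: "lipschitz_z_on \<Omega> D"
    and lip_M: "\<forall>i. lipschitz_z_on \<Omega> (M i)"
    and a_bdd: "\<forall>i j. locally_bounded_on \<Omega> (a i j)"
    and D_bdd: "locally_bounded_on (\<Omega> \<times> UNIV) (\<lambda>(p, z). D p z)"
    and M_bdd: "\<forall>i. locally_bounded_on (\<Omega> \<times> UNIV) (\<lambda>(p, z). M i p z)"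
    and a_sym: "\<forall>p\<in>\<Omega>. \<forall>i j. a i j p = a j i p"
    and a_pos: "loc_unif_pos_def \<Omega> (\<lambda>p. \<chi> i j. a i j p)"
    and D_pos: "loc_unif_pos_def (\<Omega> \<times> UNIV) (\<lambda>(p, z). D p z)"
    and K_closed: "closed K" and K_convex: "convex K" and K_ne: "K \<noteq> UNIV"
    and compat: "\<forall>p\<in>\<Omega>. \<forall>v\<in>frontier K. \<forall>\<nu>. inward_pointing K v \<nu> \<longrightarrow>
        \<phi> p v \<bullet> \<nu> \<ge> 0 \<and> left_eigenvector \<nu> (D p v) \<and> (\<forall>i. left_eigenvector \<nu> (M i p v))"
    and u_in_K: "\<forall>p\<in>\<Omega>. u p \<in> K"
  shows "\<exists>\<alpha> \<beta> \<gamma>.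
     (\<forall>i j. locally_bounded_on \<Omega> (\<alpha> i j)) \<and> (\<forall>i. locally_bounded_on \<Omega> (\<beta> i)) \<and>
     locally_bounded_on \<Omega> \<gamma> \<and> (\<forall>p\<in>\<Omega>. \<gamma> p \<ge> 0) \<and>
     loc_unif_pos_def \<Omega> (\<lambda>p. \<chi> i j. \<alpha> i j p) \<and>
     (\<forall>p0\<in>\<Omega>. \<forall>\<psi>. C_inf_on \<Omega> \<psi> \<and> \<psi> p0 = dist_bd K (u p0) \<and>
        (\<exists>e>0. \<forall>q\<in>\<Omega> \<inter> ball p0 e. \<psi> q \<le> dist_bd K (u q)) \<longrightarrow>
        pd e_t \<psi> p0 - (\<Sum>i\<in>UNIV. \<Sum>j\<in>UNIV. \<alpha> i j p0 * iter_pd [e_x i, e_x j] \<psi> p0)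
          - (\<Sum>i\<in>UNIV. \<beta> i p0 * pd (e_x i) \<psi> p0) + \<gamma> p0 * \<psi> p0 \<ge> 0)"
proof -
  obtain ut ux uxx where C21: "C21_on \<Omega> u ut ux uxx"
    and ueq: "\<forall>p\<in>\<Omega>. ut p = D p (u p) *v (\<Sum>i\<in>UNIV. \<Sum>j\<in>UNIV. a i j p *\<^sub>R uxx i j p)
                        + (\<Sum>i\<in>UNIV. M i p (u p) *v ux i p) + \<phi> p (u p)"
    using u_reg by blast
  have dt: "\<And>p. p \<in> \<Omega> \<Longrightarrow> ((\<lambda>h. u (p + h *\<^sub>R e_t)) has_vector_derivative ut p) (at 0)"
    and dx: "\<And>p i. p \<in> \<Omega> \<Longrightarrow> ((\<lambda>h. u (p + h *\<^sub>R e_x i)) has_vector_derivative ux i p) (at 0)"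
    and dxx: "\<And>p i j. p \<in> \<Omega> \<Longrightarrow> ((\<lambda>h. ux i (p + h *\<^sub>R e_x j)) has_vector_derivative uxx i j p) (at 0)"
    and cux: "\<And>i. continuous_on \<Omega> (ux i)" and cuxx: "\<And>i j. continuous_on \<Omega> (uxx i j)"
    using C21 unfolding C21_on_def by auto
  have \<Omega>o: "open \<Omega>" using X_open by (simp add: \<Omega>_def open_Times)
  have uc: "continuous_on \<Omega> u" using u_cont closure_subset continuous_on_subset by blast
  have "\<forall>p\<in>\<Omega>. \<exists>v \<nu>. v \<in> frontier K \<and> norm \<nu> = 1 \<and> (\<forall>y\<in>K. dist_bd K y \<le> \<nu> \<bullet> (y - v))
     \<and> \<nu> \<bullet> (u p - v) = dist_bd K (u p) \<and> dist (u p) v = dist_bd K (u p)"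
    using geom[OF K_closed K_convex K_ne] u_in_K by blast
  then obtain V N where VN: "\<And>p. p \<in> \<Omega> \<Longrightarrow> V p \<in> frontier K \<and> norm (N p) = 1 \<and> (\<forall>y\<in>K. dist_bd K y \<le> N p \<bullet> (y - V p))
     \<and> N p \<bullet> (u p - V p) = dist_bd K (u p) \<and> dist (u p) (V p) = dist_bd K (u p)"
    by metis
  have inw: "inward_pointing K (V p) (N p)" if p: "p \<in> \<Omega>" for p
  proof -
    define l where "l z = N p \<bullet> z - N p \<bullet> V p" for z
    have "supporting_affine K (V p) l"
      unfolding supporting_affine_def
    proof (intro conjI)
      show "V p \<in> frontier K" using VN p by blast
      show "\<exists>\<nu> c. (\<forall>z. l z = \<nu> \<bullet> z + c) \<and> norm \<nu> = 1"
        using VN p by (intro exI[of _ "N p"] exI[of _ "- (N p \<bullet> V p)"]) (simp add: l_def)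
      show "\<forall>z\<in>K. 0 \<le> l z"
      proof
        fix z assume "z \<in> K"
        then have "dist_bd K z \<le> N p \<bullet> (z - V p)" using VN p by blast
        moreover have "dist_bd K z \<ge> 0" unfolding dist_bd_def by (rule infdist_nonneg)
        ultimately show "0 \<le> l z" by (simp add: l_def inner_diff_right)
      qed
      show "l (V p) = 0" by (simp add: l_def)
    qed
    moreover have "\<forall>z. l z = N p \<bullet> z + l 0" by (simp add: l_def)
    ultimately show ?thesis unfolding inward_pointing_def by blast
  qed
  have comp: "\<phi> p (V p) \<bullet> N p \<ge> 0 \<and> left_eigenvector (N p) (D p (V p)) \<and> (\<forall>i. left_eigenvector (N p) (M i p (V p)))"
    if p: "p \<in> \<Omega>" for p
    using compat p VN[OF p] inw[OF p] by blast
  have eig: "\<exists>l. N p v* A = l *\<^sub>R N p \<Longrightarrow> norm (N p) = 1 \<Longrightarrow> N p v* A = ((N p v* A) \<bullet> N p) *\<^sub>R N p" for p A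
  proof -
    assume "\<exists>l. N p v* A = l *\<^sub>R N p" and n: "norm (N p) = 1"
    then obtain l where l: "N p v* A = l *\<^sub>R N p" by blast
    have "N p \<bullet> N p = 1" using n by (simp add: dot_square_norm)
    then have "(N p v* A) \<bullet> N p = l" using l by simp
    then show ?thesis using l by simp
  qed
  define lam where "lam p = (N p v* D p (V p)) \<bullet> N p" for p
  define mu where "mu i p = (N p v* M i p (V p)) \<bullet> N p" for i p
  have lamE: "N p v* D p (V p) = lam p *\<^sub>R N p" if p: "p \<in> \<Omega>" for p
    using eig[of p "D p (V p)"] comp[OF p] VN[OF p] unfolding lam_def left_eigenvector_def by blast
  have muE: "N p v* M i p (V p) = mu i p *\<^sub>R N p" if p: "p \<in> \<Omega>" for p i
    using eig[of p "M i p (V p)"] comp[OF p] VN[OF p] unfolding mu_def left_eigenvector_def by blast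
  have lam_in: "lam p = N p \<bullet> (D p (V p) *v N p)" for p
    by (simp add: lam_def dot_lmul_matrix)
  have mu_in: "mu i p = N p \<bullet> (M i p (V p) *v N p)" for i p
    by (simp add: mu_def dot_lmul_matrix)
  have lam_nn: "lam p \<ge> 0" if p: "p \<in> \<Omega>" for p
  proof -
    obtain e c where ec: "e > 0" "c > 0"
      "\<forall>q'\<in>(\<Omega> \<times> UNIV) \<inter> ball (p, V p) e. \<forall>\<xi>. \<xi> \<bullet> ((\<lambda>(p, z). D p z) q' *v \<xi>) \<ge> c * (norm \<xi>)\<^sup>2"
      using D_pos p unfolding loc_unif_pos_def_def by (metis SigmaI UNIV_I)
    have "(p, V p) \<in> (\<Omega> \<times> UNIV) \<inter> ball (p, V p) e" using p ec by simp
    then have "\<forall>\<xi>. \<xi> \<bullet> ((\<lambda>(p, z). D p z) (p, V p) *v \<xi>) \<ge> c * (norm \<xi>)\<^sup>2" using ec(3) by blast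
    then have "N p \<bullet> (D p (V p) *v N p) \<ge> c * (norm (N p))\<^sup>2" by simp
    then show ?thesis using ec VN[OF p] by (simp add: lam_in)
  qed
  have lipex: "\<exists>L. \<forall>z w. norm (F p z - F p w) \<le> L * dist z w"
    if p: "p \<in> \<Omega>" and lz: "lipschitz_z_on \<Omega> F" for p and F :: "(real^'n) \<times> real \<Rightarrow> real^'k \<Rightarrow> 'b::real_normed_vector"
  proof -
    have "compact {p} \<and> {p} \<subseteq> \<Omega>" using p by simp
    then obtain L where "\<forall>p'\<in>{p}. \<forall>z w. norm (F p' z - F p' w) \<le> L * dist z w"
      using lz unfolding lipschitz_z_on_def by blast
    then show ?thesis by blast
  qed
  define cK where "cK = real CARD('k) * real CARD('k)"
  have cK: "cK \<ge> 0" by (simp add: cK_def)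
  define Am where "Am p = (\<Sum>i\<in>UNIV. \<Sum>j\<in>UNIV. a i j p *\<^sub>R uxx i j p)" for p
  define \<gamma> where "\<gamma> p = cK * LipC D p * norm (Am p) + (\<Sum>i\<in>UNIV. cK * LipC (M i) p * norm (ux i p)) + LipC \<phi> p" for p
  define \<alpha> where "\<alpha> i j p = lam p * a i j p" for i j p
  define \<beta> where "\<beta> i p = mu i p" for i p
  have LipD: "\<And>p z w. p \<in> \<Omega> \<Longrightarrow> norm (D p z - D p w) \<le> LipC D p * dist z w"
    and LipDn: "\<And>p. p \<in> \<Omega> \<Longrightarrow> LipC D p \<ge> 0"
    using LipC_props(1,2) lipex lip_D by metis+
  have LipM: "\<And>p i z w. p \<in> \<Omega> \<Longrightarrow> norm (M i p z - M i p w) \<le> LipC (M i) p * dist z w"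
    and LipMn: "\<And>p i. p \<in> \<Omega> \<Longrightarrow> LipC (M i) p \<ge> 0"
    using LipC_props(1,2) lipex lip_M by metis+
  have LipF: "\<And>p z w. p \<in> \<Omega> \<Longrightarrow> norm (\<phi> p z - \<phi> p w) \<le> LipC \<phi> p * dist z w"
    and LipFn: "\<And>p. p \<in> \<Omega> \<Longrightarrow> LipC \<phi> p \<ge> 0"
    using LipC_props(1,2) lipex lip_\<phi> by metis+
  have \<gamma>nn: "\<gamma> p \<ge> 0" if p: "p \<in> \<Omega>" for p
    unfolding \<gamma>_def using LipDn[OF p] LipMn[OF p] LipFn[OF p] cK
    by (intro add_nonneg_nonneg sum_nonneg mult_nonneg_nonneg) auto
  have visc_part: "\<forall>p0\<in>\<Omega>. \<forall>\<psi>. C_inf_on \<Omega> \<psi> \<and> \<psi> p0 = dist_bd K (u p0) \<and>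
        (\<exists>e>0. \<forall>q\<in>\<Omega> \<inter> ball p0 e. \<psi> q \<le> dist_bd K (u q)) \<longrightarrow>
        pd e_t \<psi> p0 - (\<Sum>i\<in>UNIV. \<Sum>j\<in>UNIV. \<alpha> i j p0 * iter_pd [e_x i, e_x j] \<psi> p0)
          - (\<Sum>i\<in>UNIV. \<beta> i p0 * pd (e_x i) \<psi> p0) + \<gamma> p0 * \<psi> p0 \<ge> 0"
  proof (intro ballI allI impI)
    fix p0 \<psi> assume p0: "p0 \<in> \<Omega>"
      and h: "C_inf_on \<Omega> \<psi> \<and> \<psi> p0 = dist_bd K (u p0) \<and> (\<exists>e>0. \<forall>q\<in>\<Omega> \<inter> ball p0 e. \<psi> q \<le> dist_bd K (u q))"
    obtain e where e: "e > 0" "\<forall>q\<in>\<Omega> \<inter> ball p0 e. \<psi> q \<le> dist_bd K (u q)" using h by blast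
    have apsd: "\<xi> \<bullet> ((\<chi> i j. a i j p0) *v \<xi>) \<ge> 0" for \<xi>
    proof -
      obtain e' c where ec: "e' > 0" "c > 0" "\<forall>q'\<in>\<Omega> \<inter> ball p0 e'. \<forall>\<xi>. \<xi> \<bullet> ((\<chi> i j. a i j q') *v \<xi>) \<ge> c * (norm \<xi>)\<^sup>2"
        using a_pos p0 unfolding loc_unif_pos_def_def by metis
      have "p0 \<in> \<Omega> \<inter> ball p0 e'" using p0 ec by simp
      then have "\<xi> \<bullet> ((\<chi> i j. a i j p0) *v \<xi>) \<ge> c * (norm \<xi>)\<^sup>2" using ec by blast
      moreover have "c * (norm \<xi>)\<^sup>2 \<ge> 0" using ec by simp
      ultimately show ?thesis by linarith
    qed
    have dom: "dist_bd K (u q) \<le> N p0 \<bullet> (u q - V p0)" if "q \<in> \<Omega>" for q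
      using VN[OF p0] u_in_K that by blast
    have "pd e_t \<psi> p0 - (\<Sum>i\<in>UNIV. \<Sum>j\<in>UNIV. (lam p0 * a i j p0) * iter_pd [e_x i, e_x j] \<psi> p0)
          - (\<Sum>i\<in>UNIV. mu i p0 * pd (e_x i) \<psi> p0)
          + (cK * LipC D p0 * norm (Am p0) + (\<Sum>i\<in>UNIV. cK * LipC (M i) p0 * norm (ux i p0)) + LipC \<phi> p0) * \<psi> p0 \<ge> 0"
    proof (rule visc[where ut=ut and ux=ux and uxx=uxx and Vz="V p0" and Nz="N p0"])
      show "open \<Omega>" "p0 \<in> \<Omega>" by (fact \<Omega>o) (fact p0)
      show "\<And>p. p \<in> \<Omega> \<Longrightarrow> ((\<lambda>h. u (p + h *\<^sub>R e_t)) has_vector_derivative ut p) (at 0)" by (fact dt)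
      show "\<And>p i. p \<in> \<Omega> \<Longrightarrow> ((\<lambda>h. u (p + h *\<^sub>R e_x i)) has_vector_derivative ux i p) (at 0)" by (fact dx)
      show "\<And>p i j. p \<in> \<Omega> \<Longrightarrow> ((\<lambda>h. ux i (p + h *\<^sub>R e_x j)) has_vector_derivative uxx i j p) (at 0)" by (fact dxx)
      show "\<And>i. continuous_on \<Omega> (ux i)" by (fact cux)
      show "\<And>i j. continuous_on \<Omega> (uxx i j)" by (fact cuxx)
      show "Am p0 = (\<Sum>i\<in>UNIV. \<Sum>j\<in>UNIV. a i j p0 *\<^sub>R uxx i j p0)" by (simp add: Am_def)
      show "ut p0 = D p0 (u p0) *v Am p0 + (\<Sum>i\<in>UNIV. M i p0 (u p0) *v ux i p0) + \<phi> p0 (u p0)"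
        using ueq p0 by (simp add: Am_def)
      show "\<And>i j. a i j p0 = a j i p0" using a_sym p0 by blast
      show "\<And>\<xi>. \<xi> \<bullet> ((\<chi> i j. a i j p0) *v \<xi>) \<ge> 0" by (fact apsd)
      show "norm (N p0) = 1" using VN[OF p0] by blast
      show "\<And>q. q \<in> \<Omega> \<Longrightarrow> dist_bd K (u q) \<le> N p0 \<bullet> (u q - V p0)" by (fact dom)
      show "N p0 \<bullet> (u p0 - V p0) = dist_bd K (u p0)" "dist (u p0) (V p0) = dist_bd K (u p0)"
        using VN[OF p0] by blast+
      show "N p0 v* D p0 (V p0) = lam p0 *\<^sub>R N p0" by (rule lamE[OF p0])
      show "lam p0 \<ge> 0" by (rule lam_nn[OF p0])
      show "\<And>i. N p0 v* M i p0 (V p0) = mu i p0 *\<^sub>R N p0" by (rule muE[OF p0])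
      show "\<phi> p0 (V p0) \<bullet> N p0 \<ge> 0" using comp[OF p0] by blast
      show "\<And>z w. norm (D p0 z - D p0 w) \<le> LipC D p0 * dist z w" by (rule LipD[OF p0])
      show "\<And>i z w. norm (M i p0 z - M i p0 w) \<le> LipC (M i) p0 * dist z w" by (rule LipM[OF p0])
      show "\<And>z w. norm (\<phi> p0 z - \<phi> p0 w) \<le> LipC \<phi> p0 * dist z w" by (rule LipF[OF p0])
      show "LipC D p0 \<ge> 0" by (rule LipDn[OF p0])
      show "\<And>i. LipC (M i) p0 \<ge> 0" by (rule LipMn[OF p0])
      show "cK = real CARD('k) * real CARD('k)" by (fact cK_def)
      show "C_inf_on \<Omega> \<psi>" "\<psi> p0 = dist_bd K (u p0)" using h by blast+
      show "e > 0" "\<forall>q\<in>\<Omega> \<inter> ball p0 e. \<psi> q \<le> dist_bd K (u q)" using e by blast+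
    qed
    then show "pd e_t \<psi> p0 - (\<Sum>i\<in>UNIV. \<Sum>j\<in>UNIV. \<alpha> i j p0 * iter_pd [e_x i, e_x j] \<psi> p0)
          - (\<Sum>i\<in>UNIV. \<beta> i p0 * pd (e_x i) \<psi> p0) + \<gamma> p0 * \<psi> p0 \<ge> 0"
      by (simp add: \<alpha>_def \<beta>_def \<gamma>_def)
  qed
  have loc: "\<exists>r>0. \<exists>B c. c > 0 \<and> (\<forall>p\<in>\<Omega> \<inter> ball q r. (\<forall>i j. \<bar>\<alpha> i j p\<bar> \<le> B) \<and> (\<forall>i. \<bar>\<beta> i p\<bar> \<le> B)
      \<and> \<bar>\<gamma> p\<bar> \<le> B \<and> (\<forall>\<xi>. c * (norm \<xi>)\<^sup>2 \<le> \<xi> \<bullet> ((\<chi> i j. \<alpha> i j p) *v \<xi>)))"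
    if q: "q \<in> \<Omega>" for q
  proof -
    obtain r where r: "r > 0" "cball q r \<subseteq> \<Omega>" using \<Omega>o q open_contains_cball by blast
    define C where "C = cball q r"
    have cC: "compact C" and CO: "C \<subseteq> \<Omega>" and qC: "q \<in> C" using r by (auto simp: C_def)
    have "compact (u ` C)" using cC continuous_on_subset[OF uc CO] by (rule compact_continuous_image[rotated])
    then obtain Bu where Bu0: "\<forall>p\<in>C. norm (u p) \<le> Bu"
      using compact_img_bound by blast
    then have Bu: "\<And>p. p \<in> C \<Longrightarrow> norm (u p) \<le> Bu" by blast
    have "K \<noteq> {}" using u_in_K q by blast
    then obtain f0 where f0: "f0 \<in> frontier K" using frontier_not_empty[of K] K_ne by blast
    define R where "R = 2 * Bu + norm f0"
    have Vb: "norm (V p) \<le> R" if p: "p \<in> C" for p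
    proof -
      have pO: "p \<in> \<Omega>" using p CO by blast
      have "dist (u p) (V p) = dist_bd K (u p)" using VN[OF pO] by blast
      also have "\<dots> \<le> dist (u p) f0" unfolding dist_bd_def by (rule infdist_le[OF f0])
      also have "\<dots> \<le> norm (u p) + norm f0" by (simp add: dist_norm norm_triangle_ineq4)
      finally have 1: "norm (u p - V p) \<le> norm (u p) + norm f0" by (simp add: dist_norm)
      have "norm (V p) \<le> norm (u p) + norm (u p - V p)"
        using norm_triangle_ineq4[of "u p" "u p - V p"] by simp
      then show ?thesis using 1 Bu[OF p] by (simp add: R_def)
    qed
    define C2 where "C2 = C \<times> cball (0::real^'k) R"
    have cC2: "compact C2" unfolding C2_def using cC by (simp add: compact_Times)
    have C2O: "C2 \<subseteq> \<Omega> \<times> UNIV" using CO by (auto simp: C2_def)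
    have pC2: "(p, V p) \<in> C2" if "p \<in> C" for p using Vb[OF that] that by (simp add: C2_def)
    obtain BD where BD: "\<forall>x\<in>C2. norm ((\<lambda>(p, z). D p z) x) \<le> BD"
      using lb_compact[OF D_bdd cC2 C2O] by blast
    have "\<forall>i. \<exists>B. \<forall>x\<in>C2. norm ((\<lambda>(p, z). M i p z) x) \<le> B"
    proof
      fix i show "\<exists>B. \<forall>x\<in>C2. norm ((\<lambda>(p, z). M i p z) x) \<le> B"
        using lb_compact[OF M_bdd[rule_format, of i] cC2 C2O] by blast
    qed
    then obtain BMf where BMf: "\<And>i. \<forall>x\<in>C2. norm ((\<lambda>(p, z). M i p z) x) \<le> BMf i" by metis
    obtain BcD where BcD: "\<forall>x\<in>C2. BcD > 0 \<and> (\<forall>\<xi>. (1/BcD) * (norm \<xi>)\<^sup>2 \<le> \<xi> \<bullet> ((\<lambda>(p, z). D p z) x *v \<xi>))"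
      using pos_compact[OF D_pos cC2 C2O] by blast
    have "\<forall>i j. \<exists>B. \<forall>x\<in>C. norm (a i j x) \<le> B"
    proof (intro allI)
      fix i j show "\<exists>B. \<forall>x\<in>C. norm (a i j x) \<le> B"
        using lb_compact[OF a_bdd[rule_format, of i j] cC CO] by blast
    qed
    then obtain Baf where Baf: "\<And>i j. \<forall>x\<in>C. \<bar>a i j x\<bar> \<le> Baf i j" unfolding real_norm_def by metis
    obtain Bca where Bca: "\<forall>x\<in>C. Bca > 0 \<and> (\<forall>\<xi>. (1/Bca) * (norm \<xi>)\<^sup>2 \<le> \<xi> \<bullet> ((\<chi> i j. a i j x) *v \<xi>))"
      using pos_compact[OF a_pos cC CO] by auto
    obtain LDb where LDb: "\<forall>p\<in>C. \<forall>z w. norm (D p z - D p w) \<le> LDb * dist z w"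
      using lip_D[unfolded lipschitz_z_on_def, rule_format, of C] cC CO by blast
    have "\<forall>i. \<exists>L. \<forall>p\<in>C. \<forall>z w. norm (M i p z - M i p w) \<le> L * dist z w"
      using lip_M[unfolded lipschitz_z_on_def] cC CO by blast
    then obtain LMf where LMf: "\<And>i. \<forall>p\<in>C. \<forall>z w. norm (M i p z - M i p w) \<le> LMf i * dist z w" by metis
    obtain LFb where LFb: "\<forall>p\<in>C. \<forall>z w. norm (\<phi> p z - \<phi> p w) \<le> LFb * dist z w"
      using lip_\<phi>[unfolded lipschitz_z_on_def, rule_format, of C] cC CO by blast
    have "\<forall>i. \<exists>B. \<forall>p\<in>C. norm (ux i p) \<le> B"
    proof
      fix i
      have "compact (ux i ` C)" using cC continuous_on_subset[OF cux CO] by (rule compact_continuous_image[rotated])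
      then show "\<exists>B. \<forall>p\<in>C. norm (ux i p) \<le> B" by (rule compact_img_bound)
    qed
    then obtain Buxf where Buxf: "\<And>i. \<forall>p\<in>C. norm (ux i p) \<le> Buxf i" by metis
    have "\<forall>i j. \<exists>B. \<forall>p\<in>C. norm (uxx i j p) \<le> B"
    proof (intro allI)
      fix i j
      have "compact (uxx i j ` C)" using cC continuous_on_subset[OF cuxx CO] by (rule compact_continuous_image[rotated])
      then show "\<exists>B. \<forall>p\<in>C. norm (uxx i j p) \<le> B" by (rule compact_img_bound)
    qed
    then obtain Buxxf where Buxxf: "\<And>i j. \<forall>p\<in>C. norm (uxx i j p) \<le> Buxxf i j" by metis
    define Ba where "Ba = (\<Sum>i\<in>UNIV. \<Sum>j\<in>UNIV. \<bar>Baf i j\<bar>)"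
    define Bxx where "Bxx = (\<Sum>i\<in>UNIV. \<Sum>j\<in>UNIV. \<bar>Buxxf i j\<bar>)"
    define Bx where "Bx = (\<Sum>i\<in>UNIV. \<bar>Buxf i\<bar>)"
    define BM where "BM = (\<Sum>i\<in>UNIV. \<bar>BMf i\<bar>)"
    define LMb where "LMb = (\<Sum>i\<in>UNIV. \<bar>LMf i\<bar>)"
    have aB: "\<bar>a i j p\<bar> \<le> Ba" if "p \<in> C" for i j p
      using Baf[of i j] that le_sum_abs2[of Baf i j] by (auto simp: Ba_def)
    have uxxB: "norm (uxx i j p) \<le> Bxx" if "p \<in> C" for i j p
      using Buxxf[of i j] that le_sum_abs2[of Buxxf i j] by (auto simp: Bxx_def)
    have uxB: "norm (ux i p) \<le> Bx" if "p \<in> C" for i p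
      using Buxf[of i] that le_sum_abs[of Buxf i] by (auto simp: Bx_def)
    have Ba0: "Ba \<ge> 0" by (simp add: Ba_def sum_nonneg)
    have Bxx0: "Bxx \<ge> 0" by (simp add: Bxx_def sum_nonneg)
    have quad: "\<bar>N p \<bullet> (A *v N p)\<bar> \<le> cK * norm A" if "p \<in> \<Omega>" for p A
    proof -
      have n: "norm (N p) = 1" using VN[OF that] by blast
      have "\<bar>N p \<bullet> (A *v N p)\<bar> \<le> norm (N p) * norm (A *v N p)" by (rule Cauchy_Schwarz_ineq2)
      also have "\<dots> \<le> cK * norm A" using matvec_bound[of A "N p"] n by (simp add: cK_def)
      finally show ?thesis .
    qed
    have lamB: "\<bar>lam p\<bar> \<le> cK * BD" if p: "p \<in> C" for p
    proof -
      have pO: "p \<in> \<Omega>" using p CO by blast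
      have "\<bar>lam p\<bar> \<le> cK * norm (D p (V p))" using quad[OF pO] by (simp add: lam_in)
      also have "\<dots> \<le> cK * BD" using bspec[OF BD pC2[OF p]] cK by (simp add: mult_left_mono)
      finally show ?thesis .
    qed
    have muB: "\<bar>mu i p\<bar> \<le> cK * BM" if p: "p \<in> C" for i p
    proof -
      have pO: "p \<in> \<Omega>" using p CO by blast
      have "\<bar>mu i p\<bar> \<le> cK * norm (M i p (V p))" using quad[OF pO] by (simp add: mu_in)
      also have "\<dots> \<le> cK * BMf i" using bspec[OF BMf[of i] pC2[OF p]] cK by (simp add: mult_left_mono)
      also have "\<dots> \<le> cK * BM" using le_sum_abs[of BMf i] cK by (simp add: BM_def mult_left_mono)
      finally show ?thesis .
    qed
    have BcD0: "BcD > 0" using bspec[OF BcD pC2[OF qC]] by blast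
    have Bca0: "Bca > 0" using bspec[OF Bca qC] by blast
    have lamL: "lam p \<ge> 1 / BcD" if p: "p \<in> C" for p
    proof -
      have pO: "p \<in> \<Omega>" using p CO by blast
      have "(1/BcD) * (norm (N p))\<^sup>2 \<le> N p \<bullet> (D p (V p) *v N p)" using bspec[OF BcD pC2[OF p]] by simp
      then show ?thesis using VN[OF pO] by (simp add: lam_in)
    qed
    have AmB: "norm (Am p) \<le> (\<Sum>i::'n\<in>UNIV. \<Sum>j::'n\<in>UNIV. Ba * Bxx)" if p: "p \<in> C" for p
    proof -
      have "norm (Am p) \<le> (\<Sum>i\<in>UNIV. norm (\<Sum>j\<in>UNIV. a i j p *\<^sub>R uxx i j p))"
        unfolding Am_def by (rule norm_sum)
      also have "\<dots> \<le> (\<Sum>i\<in>UNIV. \<Sum>j\<in>UNIV. norm (a i j p *\<^sub>R uxx i j p))"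
        by (intro sum_mono norm_sum)
      also have "\<dots> \<le> (\<Sum>i::'n\<in>UNIV. \<Sum>j::'n\<in>UNIV. Ba * Bxx)"
      proof -
        have pt: "norm (a i j p *\<^sub>R uxx i j p) \<le> Ba * Bxx" for i j
          using aB[OF p, of i j] uxxB[OF p, of i j] Ba0 by (simp add: mult_mono)
        show ?thesis by (rule sum_mono, rule sum_mono, rule pt)
      qed
      finally show ?thesis .
    qed
    define B\<gamma> where "B\<gamma> = cK * LDb * (\<Sum>i::'n\<in>UNIV. \<Sum>j::'n\<in>UNIV. Ba * Bxx) + (\<Sum>i::'n\<in>UNIV. cK * LMb * Bx) + LFb"
    have \<gamma>B: "\<bar>\<gamma> p\<bar> \<le> B\<gamma>" if p: "p \<in> C" for p
    proof -
      have pO: "p \<in> \<Omega>" using p CO by blast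
      have LD1: "LipC D p \<le> LDb" using LipC_props(3)[where F=D and p=p and L=LDb] bspec[OF LDb p] by blast
      have LM1: "LipC (M i) p \<le> LMb" for i
      proof -
        have "LipC (M i) p \<le> LMf i" using LipC_props(3)[where F="M i" and p=p and L="LMf i"] bspec[OF LMf[of i] p] by blast
        also have "\<dots> \<le> LMb" using le_sum_abs[of LMf i] by (simp add: LMb_def)
        finally show ?thesis .
      qed
      have LF1: "LipC \<phi> p \<le> LFb" using LipC_props(3)[where F=\<phi> and p=p and L=LFb] bspec[OF LFb p] by blast
      have t1: "cK * LipC D p * norm (Am p) \<le> cK * LDb * (\<Sum>i::'n\<in>UNIV. \<Sum>j::'n\<in>UNIV. Ba * Bxx)"
        using LD1 AmB[OF p] LipDn[OF pO] cK
        by (intro mult_mono mult_left_mono) auto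
      have t2: "(\<Sum>i\<in>UNIV. cK * LipC (M i) p * norm (ux i p)) \<le> (\<Sum>i::'n\<in>UNIV. cK * LMb * Bx)"
      proof (rule sum_mono)
        fix i
        show "cK * LipC (M i) p * norm (ux i p) \<le> cK * LMb * Bx"
          using LM1[of i] uxB[OF p, of i] LipMn[OF pO, of i] cK
          by (intro mult_mono mult_left_mono) (auto intro: order_trans)
      qed
      have "\<bar>\<gamma> p\<bar> = \<gamma> p" using \<gamma>nn[OF pO] by simp
      then show ?thesis using t1 t2 LF1 by (simp add: \<gamma>_def B\<gamma>_def)
    qed
    define B where "B = \<bar>cK * BD * Ba\<bar> + \<bar>cK * BM\<bar> + \<bar>B\<gamma>\<bar>"
    define c where "c = (1/BcD) * (1/Bca)"
    have c0: "c > 0" using BcD0 Bca0 by (simp add: c_def)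
    have main: "(\<forall>i j. \<bar>\<alpha> i j p\<bar> \<le> B) \<and> (\<forall>i. \<bar>\<beta> i p\<bar> \<le> B)
      \<and> \<bar>\<gamma> p\<bar> \<le> B \<and> (\<forall>\<xi>. c * (norm \<xi>)\<^sup>2 \<le> \<xi> \<bullet> ((\<chi> i j. \<alpha> i j p) *v \<xi>))"
      if pp: "p \<in> \<Omega> \<inter> ball q r" for p
    proof (intro conjI)
      from pp have p: "p \<in> C" and pO: "p \<in> \<Omega>" by (auto simp: C_def)
      show "\<forall>i j. \<bar>\<alpha> i j p\<bar> \<le> B"
      proof (intro allI)
        fix i j
        have "\<bar>\<alpha> i j p\<bar> = \<bar>lam p\<bar> * \<bar>a i j p\<bar>" by (simp add: \<alpha>_def abs_mult)
        also have "\<dots> \<le> (cK * BD) * Ba" using lamB[OF p] aB[OF p] by (intro mult_mono) auto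
        also have "\<dots> \<le> B" by (simp add: B_def)
        finally show "\<bar>\<alpha> i j p\<bar> \<le> B" .
      qed
      show "\<forall>i. \<bar>\<beta> i p\<bar> \<le> B"
      proof
        fix i
        have "\<bar>\<beta> i p\<bar> \<le> cK * BM" using muB[OF p] by (simp add: \<beta>_def)
        also have "\<dots> \<le> B" by (simp add: B_def)
        finally show "\<bar>\<beta> i p\<bar> \<le> B" .
      qed
      show "\<bar>\<gamma> p\<bar> \<le> B" using \<gamma>B[OF p] by (simp add: B_def)
      show "\<forall>\<xi>. c * (norm \<xi>)\<^sup>2 \<le> \<xi> \<bullet> ((\<chi> i j. \<alpha> i j p) *v \<xi>)"
      proof
        fix \<xi> :: "real^'n"
        have eq: "(\<chi> i j. \<alpha> i j p) = (\<chi> i j. lam p * (\<chi> i j. a i j p)$i$j)" by (simp add: \<alpha>_def)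
        have e1: "\<xi> \<bullet> ((\<chi> i j. \<alpha> i j p) *v \<xi>) = lam p * (\<xi> \<bullet> ((\<chi> i j. a i j p) *v \<xi>))"
          unfolding eq scaleR_matvec by simp
        have e2: "(1/Bca) * (norm \<xi>)\<^sup>2 \<le> \<xi> \<bullet> ((\<chi> i j. a i j p) *v \<xi>)" using bspec[OF Bca p] by blast
        have e3: "1/BcD \<le> lam p" by (rule lamL[OF p])
        have e4: "0 \<le> (1/Bca) * (norm \<xi>)\<^sup>2" using Bca0 by simp
        have e5: "0 \<le> lam p" using e3 BcD0 by (meson less_eq_real_def order_trans zero_less_divide_1_iff)
        have "(1/BcD) * ((1/Bca) * (norm \<xi>)\<^sup>2) \<le> lam p * (\<xi> \<bullet> ((\<chi> i j. a i j p) *v \<xi>))"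
          by (rule mult_mono[OF e3 e2 e5 e4])
        then have "(1/BcD) * ((1/Bca) * (norm \<xi>)\<^sup>2) \<le> \<xi> \<bullet> ((\<chi> i j. \<alpha> i j p) *v \<xi>)"
          using e1 by simp
        then show "c * (norm \<xi>)\<^sup>2 \<le> \<xi> \<bullet> ((\<chi> i j. \<alpha> i j p) *v \<xi>)" by (simp add: c_def mult.assoc)
      qed
    qed
    show ?thesis using r(1) c0 main by blast
  qed
  show ?thesis
  proof (intro exI[of _ \<alpha>] exI[of _ \<beta>] exI[of _ \<gamma>] conjI)
    show "\<forall>i j. locally_bounded_on \<Omega> (\<alpha> i j)"
      unfolding locally_bounded_on_def real_norm_def using loc by meson
    show "\<forall>i. locally_bounded_on \<Omega> (\<beta> i)"
      unfolding locally_bounded_on_def real_norm_def using loc by meson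
    show "locally_bounded_on \<Omega> \<gamma>"
      unfolding locally_bounded_on_def real_norm_def using loc by meson
    show "\<forall>p\<in>\<Omega>. 0 \<le> \<gamma> p" using \<gamma>nn by blast
    show "loc_unif_pos_def \<Omega> (\<lambda>p. \<chi> i j. \<alpha> i j p)"
      unfolding loc_unif_pos_def_def using loc by meson
    show "\<forall>p0\<in>\<Omega>. \<forall>\<psi>. C_inf_on \<Omega> \<psi> \<and> \<psi> p0 = dist_bd K (u p0) \<and>
        (\<exists>e>0. \<forall>q\<in>\<Omega> \<inter> ball p0 e. \<psi> q \<le> dist_bd K (u q)) \<longrightarrow>
        pd e_t \<psi> p0 - (\<Sum>i\<in>UNIV. \<Sum>j\<in>UNIV. \<alpha> i j p0 * iter_pd [e_x i, e_x j] \<psi> p0)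
          - (\<Sum>i\<in>UNIV. \<beta> i p0 * pd (e_x i) \<psi> p0) + \<gamma> p0 * \<psi> p0 \<ge> 0"
      by (fact visc_part)
  qed
qed

end
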